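(* Let $1<a_1<a_2$ be coprime integers and let $S=\langle a_1,a_2\rangle=\{\lambda_1a_1+\lambda_2a_2:\lambda_1,\lambda_2\in\mathbb{N}_0\}$. Let $\mathcal{P}\subseteq(1,\infty)$ be the set of perspicacious parameters $t$ for $S$, and let $r_0^{-1}(\mathbb{Q})=\{t\in[1,\infty]: r_0(t)\in\mathbb{Q}\}$. Then $\mathcal{P}\subseteq r_0^{-1}(\mathbb{Q})$, $\mathcal{P}$ is countable, and there exists $T$ such that $\mathcal{P}$ is dense in the ray $(T,\infty)$, i.e. $(T,\infty)$ is contained in the closure of $\mathcal{P}$.
   Context: For $t\in[1,\infty)$ and $(u,v)\in\mathbb{R}^2$, $\|(u,v)\|_t=(|u|^t+|v|^t)^{1/t}$, and $\|(u,v)\|_\infty=\max(|u|,|v|)$. For $x\in S$, the factorization set is $Z(x)=\{(m,n)\in\mathbb{N}_0^2: ma_1+na_2=x\}$ (a finite set), the $t$-length set is $\mathscr{L}_t(x)=\{\|f\|_t: f\in Z(x)\}$, $\Delta_t(x)$ is the set of differences between consecutive elements of $\mathscr{L}_t(x)$ (listed in increasing order), and $\Delta_t(S)=\bigcup_{x\in S}\Delta_t(x)$. A parameter $t\in(1,\infty)$ is called dull if $\Delta_t(S)$ is dense in $[0,a_2]$ (i.e. $[0,a_2]$ is contained in the closure of $\Delta_t(S)$), and perspicacious otherwise. Define $\mu(r,t)=\left\|\left(\frac{1-r}{a_1},\frac{r}{a_2}\right)\right\|_t$ for $r\in[0,1]$, $t\in[1,\infty]$, write $\mu_t(r)=\mu(r,t)$,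 and set $r_0(t)=\min\{r\in[0,1]:\mu_t(r)=\frac{1}{a_2}\}$. *)

theory Defs
  imports "HOL-Analysis.Analysis"
begin

definition tnorm :: "real \<Rightarrow> real \<times> real \<Rightarrow> real" where
  "tnorm t p = (\<bar>fst p\<bar> powr t + \<bar>snd p\<bar> powr t) powr (1 / t)"

definition semigrp :: "nat \<Rightarrow> nat \<Rightarrow> nat set" where
  "semigrp a1 a2 = {x. \<exists>m n. x = m * a1 + n * a2}"

definition factorizations :: "nat \<Rightarrow> nat \<Rightarrow> nat \<Rightarrow> (nat \<times> nat) set" where
  "factorizations a1 a2 x = {(m, n). m * a1 + n * a2 = x}"

definition tlengths :: "nat \<Rightarrow> nat \<Rightarrow> real \<Rightarrow> nat \<Rightarrow> real set" where
  "tlengths a1 a2 t x = (\<lambda>(m, n). tnorm t (real m, real n)) ` factorizations a1 a2 x"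

definition consec_diffs :: "real set \<Rightarrow> real set" where
  "consec_diffs L = {b - a | a b. a \<in> L \<and> b \<in> L \<and> a < b \<and> \<not> (\<exists>c\<in>L. a < c \<and> c < b)}"

definition delta_t :: "nat \<Rightarrow> nat \<Rightarrow> real \<Rightarrow> nat \<Rightarrow> real set" where
  "delta_t a1 a2 t x = consec_diffs (tlengths a1 a2 t x)"

definition delta_t_S :: "nat \<Rightarrow> nat \<Rightarrow> real \<Rightarrow> real set" where
  "delta_t_S a1 a2 t = (\<Union>x\<in>semigrp a1 a2. delta_t a1 a2 t x)"

definition dull :: "nat \<Rightarrow> nat \<Rightarrow> real \<Rightarrow> bool" where
  "dull a1 a2 t \<longleftrightarrow> {0..real a2} \<subseteq> closure (delta_t_S a1 a2 t)"

definition perspicacious :: "nat \<Rightarrow> nat \<Rightarrow> real \<Rightarrow> bool" where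
  "perspicacious a1 a2 t \<longleftrightarrow> 1 < t \<and> \<not> dull a1 a2 t"

definition mu :: "nat \<Rightarrow> nat \<Rightarrow> real \<Rightarrow> real \<Rightarrow> real" where
  "mu a1 a2 r t = tnorm t ((1 - r) / real a1, r / real a2)"

definition r0 :: "nat \<Rightarrow> nat \<Rightarrow> real \<Rightarrow> real" where
  "r0 a1 a2 t = (LEAST r. r \<in> {0..1} \<and> mu a1 a2 r t = 1 / real a2)"

end

theory Submission
  imports Defs
begin

locale tsg =
  fixes a1 a2 :: nat and t :: real
  assumes a1: "1 < a1" and a12: "a1 < a2" and cop: "coprime a1 a2" and t1: "1 < t"
begin

definition uu :: "real \<Rightarrow> real" where "uu r = (1 - r) / real a1"
definition vv :: "real \<Rightarrow> real" where "vv r = r / real a2"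
definition GG :: "real \<Rightarrow> real" where "GG r = uu r powr t + vv r powr t"
definition M :: "real \<Rightarrow> real" where "M r = GG r powr (1/t)"
definition P :: "real \<Rightarrow> real" where "P r = vv r powr t / GG r"
definition hh :: "real \<Rightarrow> real" where
  "hh p = p powr ((t-1)/t) / real a2 - (1 - p) powr ((t-1)/t) / real a1"
definition D :: "real \<Rightarrow> real" where "D r = hh (P r)"

lemma a1pos: "real a1 > 1" and a2pos: "real a2 > 1" and a12r: "real a1 < real a2"
  using a1 a12 by auto

lemma a_ne0[simp]: "a1 \<noteq> 0" "a2 \<noteq> 0" using a1 a12 by auto

lemma uu_nn: "r \<le> 1 \<Longrightarrow> uu r \<ge> 0" unfolding uu_def using a1pos by auto
lemma vv_nn: "0 \<le> r \<Longrightarrow> vv r \<ge> 0" unfolding vv_def using a2pos by auto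

lemma GG_pos: assumes "0 \<le> r" "r \<le> 1" shows "GG r > 0"
proof (cases "r = 1")
  case True
  then show ?thesis unfolding GG_def vv_def uu_def using a2pos by auto
next
  case False
  then have "uu r > 0" unfolding uu_def using assms a1pos by auto
  then show ?thesis unfolding GG_def using vv_nn[OF assms(1)] by (simp add: add_pos_nonneg)
qed

lemma M_pos: "0 \<le> r \<Longrightarrow> r \<le> 1 \<Longrightarrow> M r > 0"
  unfolding M_def using GG_pos[of r] by force

lemma M_0: "M 0 = 1 / real a1"
  unfolding M_def GG_def uu_def vv_def using t1 a1pos
  by (simp add: powr_powr)

lemma M_1: "M 1 = 1 / real a2"
  unfolding M_def GG_def uu_def vv_def using t1 a2pos
  by (simp add: powr_powr)

lemma mu_eq: "0 \<le> r \<Longrightarrow> r \<le> 1 \<Longrightarrow> mu a1 a2 r t = M r"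
  unfolding mu_def tnorm_def M_def GG_def uu_def vv_def using a1pos a2pos
  by (simp add: abs_of_nonneg)

lemma P_alt: assumes "0 \<le> r" "r \<le> 1" shows "1 - P r = uu r powr t / GG r"
  using GG_pos[OF assms] unfolding P_def GG_def by (simp add: field_simps)

lemma P_range: assumes "0 \<le> r" "r \<le> 1" shows "0 \<le> P r" "P r \<le> 1"
proof -
  show "0 \<le> P r" unfolding P_def using GG_pos[OF assms] by simp
  have "0 \<le> 1 - P r" using P_alt[OF assms] GG_pos[OF assms] by simp
  then show "P r \<le> 1" by simp
qed

lemma powr_aux: assumes "g > 0" "w > 0"
  shows "(w powr t / g) powr ((t-1)/t) = w powr (t-1) * g powr (1/t - 1)"
proof -
  have "(w powr t / g) powr ((t-1)/t) = (w powr t) powr ((t-1)/t) / g powr ((t-1)/t)"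
    using assms by (simp add: powr_divide)
  also have "(w powr t) powr ((t-1)/t) = w powr (t-1)"
    using t1 by (simp add: powr_powr)
  also have "1 / g powr ((t-1)/t) = g powr (1/t - 1)"
  proof -
    have "1/t - 1 = - ((t-1)/t)" using t1 by (simp add: field_simps)
    then show ?thesis using assms by (simp add: powr_minus divide_inverse)
  qed
  then have "w powr (t-1) / g powr ((t-1)/t) = w powr (t-1) * g powr (1/t - 1)"
    by (metis times_divide_eq_right mult.right_neutral)
  finally show ?thesis .
qed

lemma M_deriv: assumes "0 < r" "r < 1" shows "(M has_real_derivative D r) (at r)"
proof -
  have up: "uu r > 0" unfolding uu_def using assms a1pos by auto
  have vp: "vv r > 0" unfolding vv_def using assms a2pos by auto
  have gp: "GG r > 0" using GG_pos assms by auto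
  have du: "(uu has_real_derivative (-1/real a1)) (at r)"
    unfolding uu_def[abs_def] by (auto intro!: derivative_eq_intros)
  have dv: "(vv has_real_derivative (1/real a2)) (at r)"
    unfolding vv_def[abs_def] by (auto intro!: derivative_eq_intros)
  have dG: "(GG has_real_derivative (t * uu r powr (t-1) * (-1/real a1) + t * vv r powr (t-1) * (1/real a2))) (at r)"
    unfolding GG_def[abs_def]
    using DERIV_add[OF DERIV_fun_powr[OF du up, of t] DERIV_fun_powr[OF dv vp, of t]]
    by simp
  have dM: "(M has_real_derivative ((1/t) * GG r powr (1/t - 1) * (t * uu r powr (t-1) * (-1/real a1) + t * vv r powr (t-1) * (1/real a2)))) (at r)"
    unfolding M_def[abs_def] using DERIV_fun_powr[OF dG gp, of "1/t"] by simp
  have "D r = (vv r powr t / GG r) powr ((t-1)/t) / real a2 - (uu r powr t / GG r) powr ((t-1)/t) / real a1"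
    unfolding D_def hh_def using P_alt[of r] assms by (simp add: P_def)
  also have "\<dots> = (1/t) * GG r powr (1/t - 1) * (t * uu r powr (t-1) * (-1/real a1) + t * vv r powr (t-1) * (1/real a2))"
    using powr_aux[OF gp up] powr_aux[OF gp vp] t1 by (simp add: field_simps)
  finally show ?thesis using dM by simp
qed

lemma cont_uu_powr: "continuous_on {0..1} (\<lambda>r. uu r powr t)"
proof -
  have "continuous_on {0..1} (\<lambda>r. ((1 - r) / real a1) powr t)"
    using t1 by (intro continuous_on_powr') (auto intro!: continuous_intros simp: a1pos)
  then show ?thesis unfolding uu_def .
qed

lemma cont_vv_powr: "continuous_on {0..1} (\<lambda>r. vv r powr t)"
proof -
  have "continuous_on {0..1} (\<lambda>r. (r / real a2) powr t)"
    using t1 by (intro continuous_on_powr') (auto intro!: continuous_intros)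
  then show ?thesis unfolding vv_def .
qed

lemma cont_GG: "continuous_on {0..1} GG"
  unfolding GG_def[abs_def] using cont_uu_powr cont_vv_powr by (rule continuous_on_add)

lemma cont_M: "continuous_on {0..1} M"
  unfolding M_def[abs_def] using cont_GG GG_pos t1
  by (intro continuous_on_powr') (auto intro!: continuous_intros less_imp_le)

lemma cont_P: "continuous_on {0..1} P"
  unfolding P_def[abs_def] using cont_GG GG_pos cont_vv_powr
  by (intro continuous_on_divide) (auto intro!: continuous_intros simp: less_imp_neq[symmetric])

lemma cont_hh: "continuous_on {0..1} hh"
  unfolding hh_def[abs_def] using t1
  by (intro continuous_intros continuous_on_powr') (auto intro!: continuous_intros)

lemma cont_D: "continuous_on {0..1} D"
proof -
  have "continuous_on {0..1} (hh \<circ> P)"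
    using cont_P cont_hh P_range by (intro continuous_on_compose) (auto intro: continuous_on_subset)
  then show ?thesis unfolding D_def[abs_def] o_def .
qed

lemma P_mono: assumes "0 \<le> r" "r < r'" "r' \<le> 1" shows "P r < P r'"
proof -
  have g: "GG r > 0" "GG r' > 0" using GG_pos assms by auto
  have "vv r * uu r' < vv r' * uu r"
    unfolding uu_def vv_def using assms a1pos a2pos by (simp add: field_simps)
  moreover have "0 \<le> vv r * uu r'" using uu_nn vv_nn assms by auto
  ultimately have "(vv r * uu r') powr t < (vv r' * uu r) powr t"
    using t1 by (intro powr_less_mono2) auto
  then have "vv r powr t * uu r' powr t < vv r' powr t * uu r powr t"
    using uu_nn vv_nn assms by (simp add: powr_mult)
  then have "vv r powr t * GG r' < vv r' powr t * GG r"
    unfolding GG_def by (simp add: algebra_simps)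
  then show ?thesis unfolding P_def using g by (simp add: field_simps)
qed

lemma hh_mono: assumes "0 \<le> p" "p < p'" "p' \<le> 1" shows "hh p < hh p'"
proof -
  have e: "(t-1)/t > 0" using t1 by simp
  have "p powr ((t-1)/t) < p' powr ((t-1)/t)" using e assms by (intro powr_less_mono2) auto
  moreover have "(1-p') powr ((t-1)/t) < (1-p) powr ((t-1)/t)" using e assms by (intro powr_less_mono2) auto
  ultimately show ?thesis unfolding hh_def using a1pos a2pos
    by (simp add: divide_strict_right_mono diff_strict_mono)
qed

lemma D_mono: assumes "0 \<le> r" "r < r'" "r' \<le> 1" shows "D r < D r'"
  unfolding D_def using P_mono[OF assms] P_range assms by (intro hh_mono) auto

lemma D_mono': assumes "0 \<le> r" "r \<le> r'" "r' \<le> 1" shows "D r \<le> D r'"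
  using D_mono[of r r'] assms by (cases "r = r'") auto

lemma P_0: "P 0 = 0" unfolding P_def vv_def by simp
lemma P_1: "P 1 = 1" unfolding P_def GG_def vv_def uu_def by simp

lemma D_0: "D 0 = - 1 / real a1" unfolding D_def P_0 hh_def using t1 by simp
lemma D_1: "D 1 = 1 / real a2" unfolding D_def P_1 hh_def using t1 by simp

lemma D_bounds: assumes "0 \<le> r" "r \<le> 1" shows "- 1 / real a1 \<le> D r" "D r \<le> 1 / real a2"
  using D_mono'[of 0 r] D_mono'[of r 1] assms D_0 D_1 by auto

lemma M_mvt: assumes "0 \<le> a" "a < b" "b \<le> 1"
  shows "\<exists>z. a < z \<and> z < b \<and> M b - M a = (b - a) * D z"
proof -
  have "continuous_on {a..b} M" using cont_M by (rule continuous_on_subset) (use assms in auto)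
  moreover have "M differentiable (at x)" if "a < x" "x < b" for x
    using M_deriv[of x] that assms real_differentiable_def by force
  ultimately obtain l z where "a < z" "z < b" "DERIV M z :> l" "M b - M a = (b - a) * l"
    using MVT[OF assms(2)] by blast
  moreover have "DERIV M z :> D z" using M_deriv \<open>a < z\<close> \<open>z < b\<close> assms by auto
  ultimately show ?thesis using DERIV_unique by blast
qed


lemma zeta_ex: "\<exists>z. 0 < z \<and> z < 1 \<and> D z = 0"
proof -
  have "D 0 \<le> 0" "0 \<le> D 1" using D_0 D_1 by auto
  then obtain z where z: "0 \<le> z" "z \<le> 1" "D z = 0" using IVT'[of D 0 0 1] cont_D by auto
  then have "z \<noteq> 0" "z \<noteq> 1" using D_0 D_1 by auto
  then show ?thesis using z by (intro exI[of _ z]) auto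
qed

definition zeta :: real where "zeta = (SOME z. 0 < z \<and> z < 1 \<and> D z = 0)"

lemma zeta: "0 < zeta" "zeta < 1" "D zeta = 0"
  using someI_ex[OF zeta_ex] unfolding zeta_def by auto

lemma D_neg: "0 \<le> r \<Longrightarrow> r < zeta \<Longrightarrow> D r < 0"
  using D_mono[of r zeta] zeta by auto
lemma D_pos: "zeta < r \<Longrightarrow> r \<le> 1 \<Longrightarrow> D r > 0"
  using D_mono[of zeta r] zeta by auto

lemma M_dec: assumes "0 \<le> a" "a < b" "b \<le> zeta" shows "M b < M a"
proof -
  obtain z where "a < z" "z < b" "M b - M a = (b - a) * D z" using M_mvt[of a b] assms zeta by auto
  moreover have "D z < 0" using D_neg[of z] calculation assms by auto
  ultimately have "(b - a) * D z < 0" using assms by (intro mult_pos_neg) auto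
  then show ?thesis using \<open>M b - M a = (b - a) * D z\<close> by linarith
qed

lemma M_inc: assumes "zeta \<le> a" "a < b" "b \<le> 1" shows "M a < M b"
proof -
  obtain z where "a < z" "z < b" "M b - M a = (b - a) * D z" using M_mvt[of a b] assms zeta by auto
  moreover have "D z > 0" using D_pos[of z] calculation assms by auto
  ultimately have "(b - a) * D z > 0" using assms by (intro mult_pos_pos) auto
  then show ?thesis using \<open>M b - M a = (b - a) * D z\<close> by linarith
qed

lemma M_zeta: "M zeta < 1 / real a2" using M_inc[of zeta 1] zeta M_1 by auto

lemma rho_ex: "\<exists>p. 0 < p \<and> p < zeta \<and> M p = 1 / real a2"
proof -
  have c: "continuous_on {0..zeta} M" using cont_M by (rule continuous_on_subset) (use zeta in auto)
  have "M zeta \<le> 1 / real a2" "1 / real a2 \<le> M 0" using M_zeta M_0 a12r a1pos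
    by (auto simp: frac_le)
  then obtain p where p: "0 \<le> p" "p \<le> zeta" "M p = 1 / real a2"
    using IVT2'[where f=M and a=0 and b=zeta and y="1/real a2"] c zeta by auto
  have "p \<noteq> 0" using p M_0 a12r by auto
  moreover have "p \<noteq> zeta" using p M_zeta by auto
  ultimately show ?thesis using p by (intro exI[of _ p]) auto
qed

definition rho :: real where "rho = (SOME p. 0 < p \<and> p < zeta \<and> M p = 1 / real a2)"

lemma rho: "0 < rho" "rho < zeta" "M rho = 1 / real a2"
  using someI_ex[OF rho_ex] unfolding rho_def by auto

lemma rho_lt1: "rho < 1" using rho zeta by auto

lemma M_above: assumes "0 \<le> r" "r < rho" shows "M r > 1 / real a2"
  using M_dec[of r rho] rho assms by auto

lemma M_below: assumes "rho < r" "r < 1" shows "M r < 1 / real a2"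
proof (cases "r \<le> zeta")
  case True
  then show ?thesis using M_dec[of rho r] rho assms by auto
next
  case False
  then show ?thesis using M_inc[of r 1] M_1 assms by auto
qed

lemma M_le_H: assumes "rho \<le> r" "r \<le> 1" shows "M r \<le> 1 / real a2"
  using M_below[of r] assms rho M_1 by (cases "r = rho \<or> r = 1") auto

lemma D_rho: "D rho < 0" using D_neg[of rho] rho by auto

lemma r0_eq: "r0 a1 a2 t = rho"
  unfolding r0_def
proof (rule Least_equality)
  show "rho \<in> {0..1} \<and> mu a1 a2 rho t = 1 / real a2"
    using rho rho_lt1 mu_eq[of rho] by auto
next
  fix y assume y: "y \<in> {0..1} \<and> mu a1 a2 y t = 1 / real a2"
  show "rho \<le> y"
  proof (rule ccontr)
    assume "\<not> rho \<le> y"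
    then have "M y > 1 / real a2" using M_above[of y] y by auto
    then show False using y mu_eq[of y] by auto
  qed
qed

end


context tsg
begin

definition sgap :: real where "sgap = real a1 * real a2 * (- D rho)"

lemma sgap_pos: "sgap > 0"
proof -
  have "real a1 * real a2 > 0" using a1pos a2pos by simp
  then have "real a1 * real a2 * D rho < 0" using D_rho by (rule mult_pos_neg)
  then show ?thesis unfolding sgap_def by simp
qed

lemma M_qconv: assumes "0 \<le> a" "a \<le> r" "r \<le> b" "b \<le> 1" shows "M r \<le> max (M a) (M b)"
proof (cases "r \<le> zeta")
  case True
  then have "M r \<le> M a" using M_dec[of a r] assms by (cases "a = r") auto
  then show ?thesis by simp
next
  case False
  then have "M r \<le> M b" using M_inc[of r b] assms by (cases "r = b") auto
  then show ?thesis by simp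
qed

lemma M_ge_H: assumes "0 \<le> r" "r \<le> rho" shows "M r \<ge> 1 / real a2"
  using M_above[of r] rho assms by (cases "r = rho") auto

lemma M_dec': assumes "0 \<le> a" "a \<le> b" "b \<le> zeta" shows "M b \<le> M a"
  using M_dec[of a b] assms by (cases "a = b") auto

lemma step_mvt: assumes "X > 0" "0 \<le> r" "r < r'" "r' \<le> 1" "r' = r + real a1 * real a2 / X"
  shows "\<exists>z. r < z \<and> z < r' \<and> X * M r' - X * M r = real a1 * real a2 * D z"
proof -
  obtain z where z: "r < z" "z < r'" "M r' - M r = (r' - r) * D z" using M_mvt assms by blast
  have "X * M r' - X * M r = X * (M r' - M r)" by (simp add: algebra_simps)
  also have "\<dots> = X * (r' - r) * D z" using z(3) by simp
  also have "X * (r' - r) = real a1 * real a2" using assms by simp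
  finally show ?thesis using z by blast
qed

lemma disc_ivt:
  fixes R :: "real set" and g :: "real \<Rightarrow> real" and d b :: real
  assumes fin: "finite R" and ap: "\<And>r r'. r\<in>R \<Longrightarrow> r'\<in>R \<Longrightarrow> r<r' \<Longrightarrow> r + d \<in> R \<and> r + d \<le> r'"
    and dpos: "d > 0"
    and u: "u \<in> R" and w: "w \<in> R" and uw: "u \<le> w" and gu: "g u < b" and gw: "g w \<ge> b"
  shows "\<exists>r. r \<in> R \<and> u \<le> r \<and> r + d \<le> w \<and> r + d \<in> R \<and> g r < b \<and> g (r + d) \<ge> b"
proof -
  define A where "A = {r \<in> R. u \<le> r \<and> r \<le> w \<and> g r < b}"
  have "finite A" "u \<in> A" using fin u uw gu unfolding A_def by auto
  define r where "r = Max A"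
  have rA: "r \<in> A" unfolding r_def using \<open>finite A\<close> \<open>u \<in> A\<close> by (intro Max_in) auto
  have rmax: "\<And>y. y \<in> A \<Longrightarrow> y \<le> r" unfolding r_def using \<open>finite A\<close> by auto
  have "r \<noteq> w" using rA gw unfolding A_def by auto
  then have "r < w" using rA unfolding A_def by auto
  then have 1: "r + d \<in> R" "r + d \<le> w" using ap[of r w] rA w unfolding A_def by auto
  have "g (r + d) \<ge> b"
  proof (rule ccontr)
    assume "\<not> g (r + d) \<ge> b"
    then have "r + d \<in> A" using 1 rA dpos unfolding A_def by auto
    then show False using rmax[of "r+d"] dpos by auto
  qed
  then show ?thesis using rA 1 unfolding A_def by auto
qed


lemma gap_classify:
  assumes X: "X > 0" and fin: "finite R" and Rsub: "R \<subseteq> {0..1}"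
    and ap: "\<And>r r'. r\<in>R \<Longrightarrow> r'\<in>R \<Longrightarrow> r<r' \<Longrightarrow> r + real a1 * real a2 / X \<in> R \<and> r + real a1 * real a2 / X \<le> r'"
    and r1: "r1 \<in> R" and r2: "r2 \<in> R" and lt: "X * M r1 < X * M r2"
    and cons: "\<And>r. r \<in> R \<Longrightarrow> \<not> (X * M r1 < X * M r \<and> X * M r < X * M r2)"
  shows "X * M r2 - X * M r1 \<le> real a1 \<or> X * M r2 - X * M r1 \<ge> sgap \<or>
     (r2 + real a1 * real a2 / X \<in> R \<and> rho < r2 + real a1 * real a2 / X \<and> r2 < zeta \<and> M (Max R) < M r2 \<and>
      (X * M r1 = X * M (r2 + real a1 * real a2 / X) \<or> X * M r1 = X * M (Max R)))"
proof -
  define d where "d = real a1 * real a2 / X"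
  have dpos: "d > 0" unfolding d_def using X a1pos a2pos by simp
  have ap': "\<And>r r'. r\<in>R \<Longrightarrow> r'\<in>R \<Longrightarrow> r<r' \<Longrightarrow> r + d \<in> R \<and> r + d \<le> r'"
    using ap unfolding d_def by blast
  have lt': "M r1 < M r2" using lt X by simp
  have cons': "\<And>r. r \<in> R \<Longrightarrow> M r < M r2 \<Longrightarrow> M r \<le> M r1"
    using cons X by (meson mult_less_cancel_left_pos not_le)
  have inR: "\<And>r. r \<in> R \<Longrightarrow> 0 \<le> r \<and> r \<le> 1" using Rsub by auto
  define rt where "rt = Max R"
  have rt: "rt \<in> R" "\<And>r. r \<in> R \<Longrightarrow> r \<le> rt" unfolding rt_def using fin r1 by (auto intro!: Max_in)
  have cross: "X * M r2 - X * M r1 \<le> real a1"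
    if "r \<in> R" "r + d \<in> R" "M r < M r2" "M r2 \<le> M (r + d)" for r
  proof -
    have "0 \<le> r" "r + d \<le> 1" using inR that by auto
    then obtain z where z: "r < z" "z < r + d" "X * M (r + d) - X * M r = real a1 * real a2 * D z"
      using step_mvt[of X r "r + d"] X dpos unfolding d_def by auto
    have "D z \<le> 1 / real a2" using D_bounds[of z] z \<open>0 \<le> r\<close> \<open>r + d \<le> 1\<close> by auto
    then have "real a1 * real a2 * D z \<le> real a1 * real a2 * (1 / real a2)"
      using a1pos a2pos by (intro mult_left_mono) auto
    also have "\<dots> = real a1" using a2pos by simp
    finally have 1: "X * M (r + d) - X * M r \<le> real a1" using z by simp
    have "M r \<le> M r1" using cons' that by auto
    then have "X * M r \<le> X * M r1" using X by simp
    moreover have "X * M r2 \<le> X * M (r + d)" using that X by simp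
    ultimately show ?thesis using 1 by linarith
  qed
  show ?thesis
  proof (cases "r2 < rho")
    case True
    have "r2 < r1"
    proof (rule ccontr)
      assume "\<not> r2 < r1"
      then have "r1 < r2" using lt' by (cases "r1 = r2") auto
      then have "M r2 < M r1" using M_dec[of r1 r2] inR r1 True rho by auto
      then show False using lt' by simp
    qed
    then have r2d: "r2 + d \<in> R" "r2 + d \<le> r1" using ap' r1 r2 by auto
    show ?thesis
    proof (cases "r2 + d \<le> rho")
      case True2: True
      have c1: "M (r2 + d) < M r2" using M_dec[of r2 "r2+d"] inR r2 dpos True2 rho by auto
      have c2: "M r1 \<le> M (r2 + d)"
      proof (cases "r1 \<le> rho")
        case True
        then show ?thesis using M_dec'[of "r2+d" r1] r2d inR[OF r2] dpos rho by auto
      next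
        case False
        then show ?thesis using M_le_H[of r1] inR[OF r1] M_ge_H[of "r2+d"] True2 inR[OF r2] dpos by auto
      qed
      have "M (r2 + d) \<le> M r1" using cons'[OF r2d(1) c1] .
      then have eq: "M r1 = M (r2 + d)" using c2 by simp
      obtain z where z: "r2 < z" "z < r2 + d" "X * M (r2 + d) - X * M r2 = real a1 * real a2 * D z"
        using step_mvt[of X r2 "r2 + d"] X dpos inR[OF r2] True2 rho_lt1 unfolding d_def by auto
      have "D z < D rho" using D_mono[of z rho] z True2 inR[OF r2] rho_lt1 by auto
      then have "real a1 * real a2 * D z < real a1 * real a2 * D rho"
        using a1pos a2pos by simp
      then have "X * M r2 - X * M r1 > sgap" unfolding sgap_def using z eq by simp
      then show ?thesis by simp
    next
      case False2: False
      have "rt \<ge> r2 + d" using rt r2d by auto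
      then have Mrt: "M rt \<le> 1 / real a2" using M_le_H[of rt] inR[OF rt(1)] False2 by auto
      have Mr2: "M r2 > 1 / real a2" using M_above[of r2] inR[OF r2] True by auto
      have Mr2d: "M (r2 + d) \<le> 1 / real a2" using M_le_H[of "r2 + d"] inR[OF r2d(1)] False2 by auto
      have "M rt \<le> M r1" using cons'[OF rt(1)] Mrt Mr2 by auto
      moreover have "M (r2 + d) \<le> M r1" using cons'[OF r2d(1)] Mr2d Mr2 by auto
      moreover have "M r1 \<le> max (M (r2 + d)) (M rt)"
        using M_qconv[of "r2 + d" r1 rt] r2d rt inR[OF r2d(1)] inR[OF rt(1)] r1 by auto
      ultimately have "M r1 = M (r2 + d) \<or> M r1 = M rt" by linarith
      moreover have "r2 < zeta" using True rho by auto
      ultimately show ?thesis using r2d Mrt Mr2 False2 unfolding d_def rt_def by auto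
    qed
  next
    case False
    have "r1 \<noteq> r2" using lt' by auto
    show ?thesis
    proof (cases "r1 < r2")
      case True
      obtain r where "r \<in> R" "r + d \<in> R" "M r < M r2" "M (r + d) \<ge> M r2"
        using disc_ivt[OF fin ap' dpos r1 r2, of M "M r2"] True lt' by auto
      then show ?thesis using cross by blast
    next
      case False3: False
      then have r12: "r2 < r1" using \<open>r1 \<noteq> r2\<close> by auto
      show ?thesis
      proof (cases "M rt \<ge> M r2")
        case True
        obtain r where "r \<in> R" "r + d \<in> R" "M r < M r2" "M (r + d) \<ge> M r2"
          using disc_ivt[OF fin ap' dpos r1 rt(1), of M "M r2"] True lt' rt r1 by auto
        then show ?thesis using cross by blast
      next
        case False4: False
        have r2d: "r2 + d \<in> R" "r2 + d \<le> r1" using ap' r1 r2 r12 by auto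
        have "r1 \<le> rt" using rt r1 by auto
        have "r2 < zeta"
        proof (rule ccontr)
          assume "\<not> r2 < zeta"
          then have "M r2 < M rt" using M_inc[of r2 rt] r12 \<open>r1 \<le> rt\<close> inR[OF rt(1)] by auto
          then show False using False4 by simp
        qed
        have Mr2d: "M (r2 + d) < M r2"
        proof (cases "r2 + d \<le> zeta")
          case True
          then show ?thesis using M_dec[of r2 "r2 + d"] inR[OF r2] dpos by auto
        next
          case False
          then have "M (r2 + d) \<le> M rt" using M_inc[of "r2 + d" rt] r2d \<open>r1 \<le> rt\<close> inR[OF rt(1)]
            by (cases "r2 + d = rt") auto
          then show ?thesis using False4 by simp
        qed
        have "M rt \<le> M r1" using cons'[OF rt(1)] False4 by auto
        moreover have "M (r2 + d) \<le> M r1" using cons'[OF r2d(1)] Mr2d by auto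
        moreover have "M r1 \<le> max (M (r2 + d)) (M rt)"
          using M_qconv[of "r2 + d" r1 rt] r2d rt inR[OF r2d(1)] inR[OF rt(1)] r1 by auto
        ultimately have "M r1 = M (r2 + d) \<or> M r1 = M rt" by linarith
        moreover have "rho < r2 + d" using False dpos by auto
        ultimately show ?thesis using r2d False4 \<open>r2 < zeta\<close> unfolding d_def rt_def by auto
      qed
    qed
  qed
qed

end


context tsg
begin

definition Rx :: "nat \<Rightarrow> real set" where
  "Rx x = (\<lambda>(m, n). real a2 * real n / real x) ` factorizations a1 a2 x"

lemma fact_fin: "finite (factorizations a1 a2 x)"
proof -
  have "factorizations a1 a2 x \<subseteq> {0..x} \<times> {0..x}"
  proof
    fix p assume "p \<in> factorizations a1 a2 x"
    then obtain m n where p: "p = (m, n)" "m * a1 + n * a2 = x" unfolding factorizations_def by auto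
    have "m \<le> m * a1" "n \<le> n * a2" using a1 a12 by auto
    then have "m \<le> x" "n \<le> x" using p(2) by linarith+
    then show "p \<in> {0..x} \<times> {0..x}" using p by auto
  qed
  then show ?thesis by (rule finite_subset) auto
qed

lemma Rx_fin: "finite (Rx x)" unfolding Rx_def using fact_fin by simp

lemma Rx_sub: "Rx x \<subseteq> {0..1}"
proof
  fix r assume "r \<in> Rx x"
  then obtain m n where mn: "m * a1 + n * a2 = x" "r = real a2 * real n / real x"
    unfolding Rx_def factorizations_def by auto
  have "real a2 * real n \<le> real x" using mn(1)
    by (metis mult.commute of_nat_add of_nat_mult le_add2 of_nat_le_iff)
  then show "r \<in> {0..1}" using mn(2) by (auto simp: divide_le_eq_1)
qed

lemma tnorm_hom: assumes "x > 0" "m * a1 + n * a2 = x"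
  shows "tnorm t (real m, real n) = real x * M (real a2 * real n / real x)"
proof -
  have X: "real x > 0" using assms by simp
  have xe: "real x = real m * real a1 + real n * real a2" using assms(2) by (metis of_nat_add of_nat_mult)
  have "1 - real a2 * real n / real x = real a1 * real m / real x" using X xe by (simp add: field_simps)
  then have u: "uu (real a2 * real n / real x) = real m / real x"
    unfolding uu_def using a1pos by simp
  have v: "vv (real a2 * real n / real x) = real n / real x"
    unfolding vv_def using X by simp
  have "M (real a2 * real n / real x) = ((real m powr t + real n powr t) / real x powr t) powr (1/t)"
    unfolding M_def GG_def u v using X by (simp add: powr_divide add_divide_distrib)
  also have "\<dots> = (real m powr t + real n powr t) powr (1/t) / real x"
    using X t1 by (simp add: powr_divide powr_powr)
  finally show ?thesis unfolding tnorm_def using X by simp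
qed

lemma tlen_eq: assumes "x > 0" shows "tlengths a1 a2 t x = (\<lambda>r. real x * M r) ` Rx x"
  unfolding tlengths_def Rx_def image_image
  by (rule image_cong[OF refl]) (auto simp: factorizations_def tnorm_hom[OF assms])

lemma fact_step: assumes "(m, n) \<in> factorizations a1 a2 x" "(m', n') \<in> factorizations a1 a2 x" "n < n'"
  shows "(m - a2, n + a1) \<in> factorizations a1 a2 x \<and> n + a1 \<le> n' \<and> a2 \<le> m"
proof -
  have e: "m * a1 + n * a2 = m' * a1 + n' * a2" using assms unfolding factorizations_def by auto
  have "m' < m"
  proof (rule ccontr)
    assume "\<not> m' < m"
    then have "m * a1 \<le> m' * a1" by simp
    moreover have "n * a2 < n' * a2" using assms(3) a12 by simp
    ultimately show False using e by linarith
  qed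
  have e2: "(m - m') * a1 = (n' - n) * a2" using e \<open>m' < m\<close> assms(3)
    by (simp add: diff_mult_distrib) 
  have "a1 dvd (n' - n) * a2" by (metis e2 dvd_triv_right)
  then have "a1 dvd (n' - n)" using cop coprime_dvd_mult_left_iff by blast
  then have "a1 \<le> n' - n" using assms(3) by (simp add: dvd_imp_le)
  then have 1: "n + a1 \<le> n'" using assms(3) by linarith
  have "a1 * a2 \<le> (n' - n) * a2" using \<open>a1 \<le> n' - n\<close> by simp
  then have "a2 * a1 \<le> (m - m') * a1" using e2 by (simp add: mult.commute)
  then have "a2 \<le> m - m'" using a1 by simp
  then have 2: "a2 \<le> m" by simp
  obtain k where "m = a2 + k" using 2 le_Suc_ex by blast
  then have "(m - a2) * a1 + (n + a1) * a2 = m * a1 + n * a2"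
    by (simp add: algebra_simps)
  then have "(m - a2, n + a1) \<in> factorizations a1 a2 x" using assms(1) unfolding factorizations_def by auto
  then show ?thesis using 1 2 by auto
qed

lemma Rx_ap: assumes "x > 0" "r \<in> Rx x" "r' \<in> Rx x" "r < r'"
  shows "r + real a1 * real a2 / real x \<in> Rx x \<and> r + real a1 * real a2 / real x \<le> r'"
proof -
  obtain m n where mn: "(m, n) \<in> factorizations a1 a2 x" "r = real a2 * real n / real x"
    using assms(2) unfolding Rx_def by auto
  obtain m' n' where mn': "(m', n') \<in> factorizations a1 a2 x" "r' = real a2 * real n' / real x"
    using assms(3) unfolding Rx_def by auto
  have "real a2 * real n < real a2 * real n'" using assms(1,4) mn(2) mn'(2) by (simp add: divide_less_cancel)
  then have "real n < real n'" using a2pos by (simp add: mult_less_cancel_left_pos)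
  then have "n < n'" by simp
  then have s: "(m - a2, n + a1) \<in> factorizations a1 a2 x" "n + a1 \<le> n'" using fact_step mn mn' by auto
  have "r + real a1 * real a2 / real x = real a2 * real (n + a1) / real x"
    using mn(2) by (simp add: add_divide_distrib algebra_simps)
  moreover then have "\<dots> \<in> Rx x" using s(1) unfolding Rx_def by force
  moreover have "real a2 * real (n + a1) / real x \<le> r'"
  proof -
    have "real (n + a1) \<le> real n'" using s(2) by linarith
    then have "real a2 * real (n + a1) \<le> real a2 * real n'" by (intro mult_left_mono) auto
    then show ?thesis using mn'(2) assms(1) by (simp add: divide_right_mono)
  qed
  ultimately show ?thesis by simp
qed

lemma Rx_top: assumes "x > 0" "factorizations a1 a2 x \<noteq> {}"
  shows "\<exists>m0 n0. (m0, n0) \<in> factorizations a1 a2 x \<and> m0 < a2 \<and> Max (Rx x) = real a2 * real n0 / real x"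
proof -
  have ne: "Rx x \<noteq> {}" using assms unfolding Rx_def by auto
  have "Max (Rx x) \<in> Rx x" using Rx_fin ne by (rule Max_in)
  then obtain m0 n0 where mn: "(m0, n0) \<in> factorizations a1 a2 x" "Max (Rx x) = real a2 * real n0 / real x"
    unfolding Rx_def by auto
  have "m0 < a2"
  proof (rule ccontr)
    assume "\<not> m0 < a2"
    then obtain k where "m0 = a2 + k" using le_Suc_ex not_less by blast
    then have "(m0 - a2) * a1 + (n0 + a1) * a2 = m0 * a1 + n0 * a2"
      by (simp add: algebra_simps)
    then have "(m0 - a2, n0 + a1) \<in> factorizations a1 a2 x" using mn(1) unfolding factorizations_def by auto
    then have "real a2 * real (n0 + a1) / real x \<in> Rx x" unfolding Rx_def by force
    then have "real a2 * real (n0 + a1) / real x \<le> Max (Rx x)" using Rx_fin by simp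
    moreover have "real a2 * real n0 / real x < real a2 * real (n0 + a1) / real x"
      using assms(1) a1 a2pos by (simp add: divide_strict_right_mono)
    ultimately show False using mn(2) by simp
  qed
  then show ?thesis using mn by blast
qed

lemma tnorm_bounds: assumes "n > 0"
  shows "real n \<le> tnorm t (real m, real n)" "tnorm t (real m, real n) \<le> real n + real m powr t / real n powr (t - 1)"
proof -
  have N: "real n > 0" using assms by simp
  have "real n = (real n powr t) powr (1/t)" using t1 N by (simp add: powr_powr)
  also have "\<dots> \<le> (real m powr t + real n powr t) powr (1/t)" using t1 by (intro powr_mono2) auto
  finally show "real n \<le> tnorm t (real m, real n)" unfolding tnorm_def by simp
  define y where "y = (real m / real n) powr t"
  have y0: "y \<ge> 0" unfolding y_def by simp
  have "real m powr t + real n powr t = real n powr t * (1 + y)"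
    unfolding y_def using N by (simp add: powr_divide field_simps)
  then have "tnorm t (real m, real n) = real n * (1 + y) powr (1/t)"
    unfolding tnorm_def using N t1 y0 by (simp add: powr_mult powr_powr)
  also have "(1 + y) powr (1/t) \<le> (1 + y) powr 1" using y0 t1 by (intro powr_mono) auto
  then have "real n * (1 + y) powr (1/t) \<le> real n * (1 + y)" using N y0 by simp
  also have "real n * (1 + y) = real n + real m powr t / real n powr (t - 1)"
    unfolding y_def using N by (simp add: powr_divide powr_diff field_simps)
  finally show "tnorm t (real m, real n) \<le> real n + real m powr t / real n powr (t - 1)" .
qed

end


context tsg
begin

lemma tail_bound: assumes "e > 0" shows "\<exists>N1\<ge>1. \<forall>n\<ge>N1. real a2 powr t / n powr (t - 1) < e"
proof -
  have "((\<lambda>n::real. n powr (1 - t)) \<longlongrightarrow> 0) at_top"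
    using t1 by (intro tendsto_neg_powr filterlim_ident) auto
  then have "((\<lambda>n::real. real a2 powr t * n powr (1 - t)) \<longlongrightarrow> 0) at_top"
    by (rule tendsto_mult_right_zero)
  then have "eventually (\<lambda>n. real a2 powr t * n powr (1 - t) < e) at_top"
    using assms by (rule order_tendstoD(2))
  then obtain N where N: "\<And>n. n \<ge> N \<Longrightarrow> real a2 powr t * n powr (1 - t) < e"
    unfolding eventually_at_top_linorder by auto
  have "\<forall>n\<ge>max N 1. real a2 powr t / n powr (t - 1) < e"
  proof (intro allI impI)
    fix n :: real assume n: "n \<ge> max N 1"
    have "n powr (1 - t) = 1 / n powr (t - 1)"
      using n by (metis minus_diff_eq powr_minus_divide)
    then show "real a2 powr t / n powr (t - 1) < e" using N[of n] n by simp
  qed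
  then show ?thesis by (intro exI[of _ "max N 1"]) auto
qed

lemma M_mvt_sym: assumes "0 \<le> r" "r \<le> 1" "0 \<le> r'" "r' \<le> 1"
  shows "\<exists>z. \<bar>z - r'\<bar> \<le> \<bar>r - r'\<bar> \<and> 0 \<le> z \<and> z \<le> 1 \<and> M r - M r' = (r - r') * D z"
proof -
  consider "r = r'" | "r < r'" | "r' < r" by linarith
  then show ?thesis
  proof cases
    case 1 then show ?thesis using assms by (intro exI[of _ r']) auto
  next
    case 2
    then obtain z where "r < z" "z < r'" "M r' - M r = (r' - r) * D z" using M_mvt assms by blast
    then show ?thesis using assms by (intro exI[of _ z]) (auto simp: algebra_simps)
  next
    case 3
    then obtain z where "r' < z" "z < r" "M r - M r' = (r - r') * D z" using M_mvt assms by blast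
    then show ?thesis using assms by (intro exI[of _ z]) (auto simp: algebra_simps)
  qed
qed

lemma delta_elem: assumes "x > 0" "g \<in> delta_t a1 a2 t x"
  obtains r1 r2 where "r1 \<in> Rx x" "r2 \<in> Rx x" "g = real x * M r2 - real x * M r1"
    "real x * M r1 < real x * M r2"
    "\<And>r. r \<in> Rx x \<Longrightarrow> \<not> (real x * M r1 < real x * M r \<and> real x * M r < real x * M r2)"
  using assms(2) unfolding delta_t_def consec_diffs_def tlen_eq[OF assms(1)] by blast

lemma semigrp_ne: "x \<in> semigrp a1 a2 \<Longrightarrow> factorizations a1 a2 x \<noteq> {}"
  unfolding semigrp_def factorizations_def by auto


lemma asymp_C:
  assumes rat: "rho = real_of_int p / real_of_int q" "q > 0" and eps: "e > 0"
  shows "\<exists>X0::nat. \<forall>x\<ge>X0. \<forall>g \<in> delta_t a1 a2 t x. g \<le> real a1 \<or> g \<ge> sgap - e \<or>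
     (\<exists>k::int. \<exists>j::nat. j < a2 \<and> - (2 * real a1 / (- D rho)) \<le> k / q \<and> k / q \<le> real a1 * real a2 \<and>
        \<bar>g - (k / q * (- D rho) + real j * real a1 / real a2)\<bar> < e)"
proof -
  define \<sigma> where "\<sigma> = - D rho"
  have sp: "\<sigma> > 0" unfolding \<sigma>_def using D_rho by simp
  define C where "C = 2 * real a1 / \<sigma>"
  have Cp: "C > 0" unfolding C_def using sp a1pos by simp
  define Cb where "Cb = real a1 * real a2 + C"
  have Cbp: "Cb > 0" unfolding Cb_def using Cp a1pos a2pos by (simp add: add_pos_pos)
  define e' where "e' = min (\<sigma>/2) (e / (2 * (Cb + 1)))"
  have e'p: "e' > 0" unfolding e'_def using sp eps Cbp by simp
  have e'1: "e' \<le> \<sigma>/2" unfolding e'_def by (rule min.cobounded1)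
  have e'2: "(Cb + 1) * e' \<le> e / 2"
  proof -
    have "e' \<le> e / (2 * (Cb + 1))" unfolding e'_def by simp
    then have "(Cb + 1) * e' \<le> (Cb + 1) * (e / (2 * (Cb + 1)))" using Cbp by (intro mult_left_mono) auto
    also have "\<dots> = e / 2" using Cbp by (simp add: field_simps)
    finally show ?thesis .
  qed
  have ex: "(Cb+1)*e' = real a1 * real a2 * e' + C * e' + e'" unfolding Cb_def by (simp add: algebra_simps)
  have "0 \<le> C * e'" "0 \<le> real a1 * real a2 * e'" using Cp e'p by auto
  then have e'3: "real a1 * real a2 * e' \<le> e / 2" and e'4: "Cb * e' \<le> e / 2"
    using e'2 e'p ex unfolding Cb_def by (auto simp: algebra_simps)
  obtain d where dp: "d > 0" and dD: "\<And>r. r \<in> {0..1} \<Longrightarrow> dist r rho < d \<Longrightarrow> dist (D r) (D rho) < e'"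
    using cont_D e'p rho rho_lt1 unfolding continuous_on_iff by (metis atLeastAtMost_iff less_imp_le)
  define \<eta> where "\<eta> = min (d/2) ((zeta - rho)/2)"
  have \<eta>p: "\<eta> > 0" unfolding \<eta>_def using dp rho by simp
  have "\<eta> \<le> (zeta - rho)/2" unfolding \<eta>_def by (rule min.cobounded2)
  then have \<eta>1: "rho + \<eta> < zeta" using rho(2) by (simp add: field_simps)
  have "\<eta> \<le> d/2" unfolding \<eta>_def by (rule min.cobounded1)
  then have \<eta>2: "2 * \<eta> \<le> d" by linarith
  have Dnear: "\<bar>D r - D rho\<bar> < e'" if "0 \<le> r" "r \<le> 1" "\<bar>r - rho\<bar> < 2 * \<eta>" for r
    using dD[of r] that \<eta>2 by (auto simp: dist_real_def)
  define c0 where "c0 = M rho - M (rho + \<eta>)"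
  have c0p: "c0 > 0" unfolding c0_def using M_dec[of rho "rho + \<eta>"] rho \<eta>p \<eta>1 by auto
  obtain N1 where N1: "N1 \<ge> 1" "\<And>n. n \<ge> N1 \<Longrightarrow> real a2 powr t / n powr (t - 1) < e / 2"
    using tail_bound[of "e/2"] eps by auto
  define B where "B = max (real a1 * real a2 / \<eta>) (max (real a1 / c0) (real a1 * real a2 + real a2 * N1))"
  define X0 where "X0 = nat \<lceil>B\<rceil> + 1"
  show ?thesis
  proof (intro exI[of _ X0] allI impI ballI)
    fix x g assume x: "X0 \<le> x" and g: "g \<in> delta_t a1 a2 t x"
    define X where "X = real x"
    have XB: "X > B" unfolding X_def using x unfolding X0_def by linarith
    have Xp: "X > 0" using XB unfolding B_def using \<eta>p a1pos a2pos
      by (smt (verit) divide_pos_pos mult_pos_pos)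
    have x0: "x > 0" using Xp unfolding X_def by simp
    define dl where "dl = real a1 * real a2 / X"
    have dlp: "dl > 0" unfolding dl_def using Xp a1pos a2pos by simp
    have dl\<eta>: "dl < \<eta>"
    proof -
      have "real a1 * real a2 / \<eta> < X" using XB unfolding B_def by simp
      then show ?thesis unfolding dl_def using \<eta>p Xp by (simp add: field_simps)
    qed
    have Xc0: "X * c0 > real a1"
    proof -
      have "real a1 / c0 < X" using XB unfolding B_def by simp
      then show ?thesis using c0p by (simp add: field_simps)
    qed
    obtain r1 r2 where r: "r1 \<in> Rx x" "r2 \<in> Rx x" "g = X * M r2 - X * M r1" "X * M r1 < X * M r2"
      "\<And>r. r \<in> Rx x \<Longrightarrow> \<not> (X * M r1 < X * M r \<and> X * M r < X * M r2)"
      using delta_elem[OF x0 g] unfolding X_def by metis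
    have ap: "\<And>r r'. r\<in>Rx x \<Longrightarrow> r'\<in>Rx x \<Longrightarrow> r<r' \<Longrightarrow> r + real a1 * real a2 / X \<in> Rx x \<and> r + real a1 * real a2 / X \<le> r'"
      using Rx_ap[OF x0] unfolding X_def by blast
    have inR: "\<And>r. r \<in> Rx x \<Longrightarrow> 0 \<le> r \<and> r \<le> 1" using Rx_sub[of x] atLeastAtMost_iff by blast
    note gc = gap_classify[OF Xp Rx_fin Rx_sub ap r(1) r(2) r(4) r(5)]
    show "g \<le> real a1 \<or> g \<ge> sgap - e \<or>
     (\<exists>k::int. \<exists>j::nat. j < a2 \<and> - (2 * real a1 / (- D rho)) \<le> k / q \<and> k / q \<le> real a1 * real a2 \<and>
        \<bar>g - (k / q * (- D rho) + real j * real a1 / real a2)\<bar> < e)"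
    proof (cases "g \<le> real a1 \<or> g \<ge> sgap")
      case True
      then show ?thesis using eps by auto
    next
      case False
      then have G3: "r2 + dl \<in> Rx x" "rho < r2 + dl" "r2 < zeta" "M (Max (Rx x)) < M r2"
        "X * M r1 = X * M (r2 + dl) \<or> X * M r1 = X * M (Max (Rx x))"
        using gc r(3) unfolding dl_def by auto
      have fne: "factorizations a1 a2 x \<noteq> {}" using r(1) unfolding Rx_def by auto
      obtain m0 n0 where mn0: "(m0, n0) \<in> factorizations a1 a2 x" "m0 < a2" "Max (Rx x) = real a2 * real n0 / X"
        using Rx_top[OF x0 fne] unfolding X_def by blast
      have xe: "X = real m0 * real a1 + real n0 * real a2"
        using mn0(1) unfolding factorizations_def X_def by (auto simp del: of_nat_add of_nat_mult simp add: of_nat_add[symmetric] of_nat_mult[symmetric])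
      have Rtop: "X * M (Max (Rx x)) = tnorm t (real m0, real n0)"
        using tnorm_hom[OF x0, of m0 n0] mn0 unfolding factorizations_def X_def by simp
      have n0big: "real n0 \<ge> N1"
      proof -
        have "real m0 * real a1 \<le> real a2 * real a1" using mn0(2) by (intro mult_right_mono) auto
        moreover have "real a1 * real a2 + real a2 * N1 < X" using XB unfolding B_def by simp
        ultimately have "real a2 * N1 < real n0 * real a2" using xe by (simp add: algebra_simps)
        then show ?thesis using a2pos by (simp add: mult.commute)
      qed
      then have n0p: "n0 > 0" using N1 by (cases n0) auto
      define ee where "ee = tnorm t (real m0, real n0) - real n0"
      have ee0: "ee \<ge> 0" unfolding ee_def using tnorm_bounds(1)[OF n0p] by simp
      have ee1: "ee < e / 2"
      proof -
        have "real m0 powr t \<le> real a2 powr t" using mn0(2) t1 by (intro powr_mono2) auto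
        then have "real m0 powr t / real n0 powr (t - 1) \<le> real a2 powr t / real n0 powr (t - 1)"
          using n0p by (intro divide_right_mono) auto
        then show ?thesis unfolding ee_def using tnorm_bounds(2)[OF n0p, of m0] N1(2)[OF n0big] by linarith
      qed
      define H where "H = X / real a2"
      have HM: "X * M rho = H" unfolding H_def using rho by simp
      have Hn0: "H - real n0 = real m0 * real a1 / real a2" unfolding H_def xe using a2pos by (simp add: field_simps)
      have Rlow: "X * M (Max (Rx x)) > H - real a1"
      proof -
        have "real m0 * real a1 / real a2 < real a1"
          using mn0(2) a1pos a2pos by (simp add: field_simps)
        then show ?thesis using Rtop ee0 Hn0 unfolding ee_def by linarith
      qed
      have r2R: "0 \<le> r2" "r2 + dl \<le> 1" using inR r(2) inR G3(1) by auto
      have r2up: "r2 < rho + \<eta>"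
      proof (rule ccontr)
        assume "\<not> r2 < rho + \<eta>"
        then have "M r2 \<le> M (rho + \<eta>)" using M_dec'[of "rho + \<eta>" r2] G3(3) rho \<eta>p by auto
        then have "X * M r2 \<le> X * M rho - X * c0" unfolding c0_def using Xp by (simp add: algebra_simps)
        moreover have "X * M r2 > H - real a1" using Rlow mult_strict_left_mono[OF G3(4) Xp] by linarith
        ultimately show False using HM Xc0 by linarith
      qed
      have r2low: "rho - dl < r2" using G3(2) by simp
      from G3(5) show ?thesis
      proof
        assume eq: "X * M r1 = X * M (r2 + dl)"
        obtain z where z: "r2 < z" "z < r2 + dl" "X * M (r2 + dl) - X * M r2 = real a1 * real a2 * D z"
          using step_mvt[of X r2 "r2 + dl"] Xp dlp r2R unfolding dl_def by auto
        have "\<bar>z - rho\<bar> < 2 * \<eta>" using z r2up r2low dl\<eta> by auto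
        then have "\<bar>D z - D rho\<bar> < e'" using Dnear[of z] z r2R by auto
        then have "- D z > \<sigma> - e'" unfolding \<sigma>_def by linarith
        then have "real a1 * real a2 * (- D z) \<ge> real a1 * real a2 * (\<sigma> - e')"
          using a1pos a2pos by (intro mult_left_mono) auto
        then have "g \<ge> sgap - real a1 * real a2 * e'" using r(3) eq z(3) unfolding sgap_def \<sigma>_def
          by (simp add: algebra_simps)
        then show ?thesis using e'3 eps by auto
      next
        assume eq: "X * M r1 = X * M (Max (Rx x))"
        obtain m2 n2 where mn2: "(m2, n2) \<in> factorizations a1 a2 x" "r2 = real a2 * real n2 / X"
          using r(2) unfolding Rx_def X_def by auto
        define \<kappa> where "\<kappa> = X * (rho - r2)"
        define k where "k = int x * p - q * int a2 * int n2"
        have \<kappa>k: "\<kappa> = real_of_int k / real_of_int q"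
          unfolding \<kappa>_def k_def rat mn2(2) X_def using Xp rat(2) unfolding X_def by (simp add: field_simps)
        obtain z where z: "\<bar>z - rho\<bar> \<le> \<bar>r2 - rho\<bar>" "0 \<le> z" "z \<le> 1" "M r2 - M rho = (r2 - rho) * D z"
          using M_mvt_sym[of r2 rho] r2R rho rho_lt1 dlp by auto
        have zn: "\<bar>z - rho\<bar> < 2 * \<eta>" using z(1) r2up r2low dl\<eta> by auto
        then have Dz: "\<bar>D z - D rho\<bar> < e'" using Dnear[of z] z by auto
        have "X * M r2 - H = X * (M r2 - M rho)" using HM by (simp add: algebra_simps)
        also have "\<dots> = X * ((r2 - rho) * D z)" using z(4) by simp
        also have "\<dots> = \<kappa> * (- D z)" unfolding \<kappa>_def by (simp add: algebra_simps)
        finally have main: "X * M r2 - H = \<kappa> * (- D z)" .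
        have \<kappa>up: "\<kappa> \<le> real a1 * real a2"
        proof -
          have "rho - r2 \<le> dl" using r2low by simp
          then have "X * (rho - r2) \<le> X * dl" using Xp by (intro mult_left_mono) auto
          then show ?thesis unfolding \<kappa>_def dl_def using Xp by simp
        qed
        have \<kappa>low: "- C \<le> \<kappa>"
        proof (cases "r2 \<le> rho")
          case True
          then have "\<kappa> \<ge> 0" unfolding \<kappa>_def using Xp by simp
          then show ?thesis using Cp by simp
        next
          case False
          have "- D z \<ge> \<sigma> / 2" using Dz e'1 unfolding \<sigma>_def by linarith
          have "X * M r2 > H - real a1" using Rlow mult_strict_left_mono[OF G3(4) Xp] by linarith
          then have "\<kappa> * (- D z) > - real a1" using main by linarith
          moreover have "\<kappa> \<le> 0" unfolding \<kappa>_def using False Xp by (simp add: mult_nonneg_nonpos)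
          ultimately have "\<kappa> * (\<sigma> / 2) > - real a1"
            using \<open>- D z \<ge> \<sigma> / 2\<close> by (smt (verit, best) mult_left_mono_neg)
          then show ?thesis unfolding C_def using sp by (simp add: field_simps)
        qed
        have "real a1 * real a2 > 0" using a1pos a2pos by simp
        then have \<kappa>abs: "\<bar>\<kappa>\<bar> \<le> Cb" unfolding Cb_def using \<kappa>up \<kappa>low Cp by linarith
        have err1: "\<bar>\<kappa> * (- D z) - \<kappa> * \<sigma>\<bar> \<le> e / 2"
        proof -
          have "\<bar>\<kappa> * (- D z) - \<kappa> * \<sigma>\<bar> = \<bar>\<kappa>\<bar> * \<bar>D z - D rho\<bar>"
            unfolding \<sigma>_def by (simp add: abs_mult[symmetric] algebra_simps)
          also have "\<dots> \<le> Cb * e'" using \<kappa>abs Dz by (intro mult_mono) auto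
          finally show ?thesis using e'4 by linarith
        qed
        have geq: "g = \<kappa> * (- D z) + real m0 * real a1 / real a2 - ee"
          using r(3) eq Rtop main Hn0 unfolding ee_def by linarith
        have "\<bar>g - (\<kappa> * \<sigma> + real m0 * real a1 / real a2)\<bar> < e"
          using geq err1 ee0 ee1 by linarith
        then show ?thesis
          using \<kappa>k \<kappa>low \<kappa>up mn0(2) unfolding C_def \<sigma>_def
          by (intro disjI2 exI[of _ k] exI[of _ m0]) auto
      qed
    qed
  qed
qed

end


lemma consec_fin: "finite L \<Longrightarrow> finite (consec_diffs L)"
proof -
  assume "finite L"
  have "consec_diffs L \<subseteq> (\<lambda>(a, b). b - a) ` (L \<times> L)" unfolding consec_diffs_def by auto
  moreover have "finite ((\<lambda>(a, b). b - a) ` (L \<times> L))" using \<open>finite L\<close> by auto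
  ultimately show ?thesis by (rule finite_subset)
qed

context tsg
begin

lemma delta_fin: "finite (delta_t a1 a2 t x)"
  unfolding delta_t_def tlengths_def using fact_fin by (intro consec_fin) auto

lemma sgap_le: "sgap \<le> real a2"
proof -
  have "- D rho \<le> 1 / real a1" using D_bounds(1)[of rho] rho rho_lt1 by (simp add: field_simps)
  then have "real a1 * real a2 * (- D rho) \<le> real a1 * real a2 * (1 / real a1)"
    using a1pos a2pos by (intro mult_left_mono) auto
  then show ?thesis unfolding sgap_def using a1pos by simp
qed

lemma persp_rat: assumes "rho \<in> \<rat>" "sgap > real a1" shows "\<not> dull a1 a2 t"
proof -
  obtain p q where pq: "q > 0" "rho = real_of_int p / real_of_int q" using Rats_cases'[OF assms(1)] by metis
  define \<sigma> where "\<sigma> = - D rho"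
  define C where "C = 2 * real a1 / \<sigma>"
  define V where "V = {v. \<exists>k::int. \<exists>j::nat. j < a2 \<and> - C \<le> k / q \<and> k / q \<le> real a1 * real a2 \<and>
        v = k / q * \<sigma> + real j * real a1 / real a2}"
  have finV: "finite V"
  proof -
    have "V \<subseteq> (\<lambda>(k, j). real_of_int k / real_of_int q * \<sigma> + real j * real a1 / real a2) `
        ({\<lfloor>- C * q\<rfloor>..\<lceil>real a1 * real a2 * q\<rceil>} \<times> {..<a2})"
    proof
      fix v assume "v \<in> V"
      then obtain k :: int and j :: nat where kj: "j < a2" "- C \<le> k / q" "k / q \<le> real a1 * real a2"
        "v = k / q * \<sigma> + real j * real a1 / real a2" unfolding V_def by blast
      have qp: "real_of_int q > 0" using pq by simp
      have "- C * q \<le> k" using kj(2) qp by (simp add: field_simps)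
      then have "\<lfloor>- C * q\<rfloor> \<le> k" by linarith
      moreover have "k \<le> real a1 * real a2 * q" using kj(3) qp by (simp add: field_simps)
      then have "k \<le> \<lceil>real a1 * real a2 * q\<rceil>" by linarith
      ultimately show "v \<in> (\<lambda>(k, j). real_of_int k / real_of_int q * \<sigma> + real j * real a1 / real a2) `
        ({\<lfloor>- C * q\<rfloor>..\<lceil>real a1 * real a2 * q\<rceil>} \<times> {..<a2})" using kj by force
    qed
    then show ?thesis by (rule finite_subset) auto
  qed
  have "infinite {real a1<..<sgap}" using assms(2) by simp
  then have "infinite ({real a1<..<sgap} - V)" using finV by (rule Diff_infinite_finite[rotated])
  then obtain c where c: "c \<in> {real a1<..<sgap}" "c \<notin> V" by (metis Diff_iff finite.emptyI ex_in_conv)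
  define F where "F = insert (real a1) (insert sgap V)"
  have finF: "finite F" unfolding F_def using finV by simp
  define e0 where "e0 = Min ((\<lambda>v. \<bar>c - v\<bar>) ` F)"
  have e0F: "\<And>v. v \<in> F \<Longrightarrow> e0 \<le> \<bar>c - v\<bar>" unfolding e0_def using finF by auto
  have e0p: "e0 > 0"
  proof -
    have "e0 \<in> (\<lambda>v. \<bar>c - v\<bar>) ` F" unfolding e0_def using finF by (intro Min_in) (auto simp: F_def)
    then obtain v where "v \<in> F" "e0 = \<bar>c - v\<bar>" by auto
    moreover have "v \<noteq> c" using \<open>v \<in> F\<close> c unfolding F_def by auto
    ultimately show ?thesis by simp
  qed
  define e where "e = e0 / 2"
  have ep: "e > 0" unfolding e_def using e0p by simp
  obtain X0 where X0: "\<And>x g. x \<ge> X0 \<Longrightarrow> g \<in> delta_t a1 a2 t x \<Longrightarrow> g \<le> real a1 \<or> g \<ge> sgap - e \<or>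
     (\<exists>k::int. \<exists>j::nat. j < a2 \<and> - (2 * real a1 / (- D rho)) \<le> k / q \<and> k / q \<le> real a1 * real a2 \<and>
        \<bar>g - (k / q * (- D rho) + real j * real a1 / real a2)\<bar> < e)"
    using asymp_C[OF pq(2) pq(1) ep] by blast
  define W where "W = (\<Union>x<X0. delta_t a1 a2 t x)"
  have finW: "finite W" unfolding W_def using delta_fin by auto
  define J where "J = ball c e - W"
  have openJ: "open J" unfolding J_def using finW by (intro open_Diff finite_imp_closed) auto
  have "infinite (ball c e)" using ep by (simp add: ball_eq_greaterThanLessThan)
  then have "infinite J" unfolding J_def using finW by (rule Diff_infinite_finite[rotated])
  then obtain y where yJ: "y \<in> J" by (metis finite.emptyI ex_in_conv)
  have disj: "J \<inter> delta_t_S a1 a2 t = {}"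
  proof (rule ccontr)
    assume "J \<inter> delta_t_S a1 a2 t \<noteq> {}"
    then obtain g x where gJ: "g \<in> J" and gx: "g \<in> delta_t a1 a2 t x"
      unfolding delta_t_S_def by auto
    have "x \<ge> X0" using gJ gx unfolding J_def W_def by (meson Diff_iff UN_I lessThan_iff not_le)
    have gb: "\<bar>g - c\<bar> < e" using gJ unfolding J_def by (auto simp: dist_real_def abs_minus_commute)
    have "c - real a1 \<ge> e0" using e0F[of "real a1"] c unfolding F_def by auto
    moreover have "sgap - c \<ge> e0" using e0F[of sgap] c unfolding F_def by auto
    ultimately consider "g \<le> real a1" | "g \<ge> sgap - e" | "\<exists>v\<in>V. \<bar>g - v\<bar> < e"
      using X0[OF \<open>x \<ge> X0\<close> gx] unfolding V_def C_def \<sigma>_def by blast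
    then show False
    proof cases
      case 1 then show ?thesis using gb \<open>c - real a1 \<ge> e0\<close> unfolding e_def by linarith
    next
      case 2 then show ?thesis using gb \<open>sgap - c \<ge> e0\<close> unfolding e_def by linarith
    next
      case 3
      then obtain v where "v \<in> V" "\<bar>g - v\<bar> < e" by auto
      moreover have "e0 \<le> \<bar>c - v\<bar>" using e0F[of v] \<open>v \<in> V\<close> unfolding F_def by auto
      ultimately show ?thesis using gb unfolding e_def by linarith
    qed
  qed
  have "y \<notin> closure (delta_t_S a1 a2 t)"
    using disj openJ yJ open_Int_closure_eq_empty by blast
  moreover have "y \<in> {0..real a2}"
  proof -
    have "\<bar>y - c\<bar> < e" using yJ unfolding J_def by (auto simp: dist_real_def abs_minus_commute)
    moreover have "c - real a1 \<ge> e0" using e0F[of "real a1"] c unfolding F_def by auto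
    moreover have "sgap - c \<ge> e0" using e0F[of sgap] c unfolding F_def by auto
    ultimately show ?thesis using sgap_le a1pos e0p unfolding e_def atLeastAtMost_iff abs_less_iff by linarith
  qed
  ultimately show ?thesis unfolding dull_def by auto
qed

end


context tsg
begin

lemma intro_delta: assumes "x > 0" "r1 \<in> Rx x" "r2 \<in> Rx x" "real x * M r1 < real x * M r2"
  "\<And>r. r \<in> Rx x \<Longrightarrow> \<not> (real x * M r1 < real x * M r \<and> real x * M r < real x * M r2)"
  shows "real x * M r2 - real x * M r1 \<in> delta_t a1 a2 t x"
  unfolding delta_t_def consec_diffs_def tlen_eq[OF assms(1)] using assms(2-5) by blast

lemma Rx_mult: assumes "N > 0" shows "Rx (a1 * a2 * N) = (\<lambda>k. real k / real N) ` {..N}"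
proof
  show "Rx (a1 * a2 * N) \<subseteq> (\<lambda>k. real k / real N) ` {..N}"
  proof
    fix r assume "r \<in> Rx (a1 * a2 * N)"
    then obtain m n where mn: "m * a1 + n * a2 = a1 * a2 * N" "r = real a2 * real n / real (a1 * a2 * N)"
      unfolding Rx_def factorizations_def by auto
    have "a2 dvd m * a1 + n * a2" unfolding mn(1) by simp
    then have "a2 dvd m * a1" using dvd_add_left_iff[of a2 "n*a2" "m*a1"] by simp
    then have "a2 dvd m" using cop by (metis coprime_commute coprime_dvd_mult_left_iff)
    then obtain i where i: "m = a2 * i" by auto
    have "a2 * (i * a1 + n) = a2 * (a1 * N)" using mn(1) i by (simp add: algebra_simps)
    then have ni: "i * a1 + n = a1 * N" using a12 by simp
    then have "n = a1 * (N - i)" by (simp add: diff_mult_distrib2 mult.commute)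
    have "i \<le> N"
    proof (rule ccontr)
      assume "\<not> i \<le> N"
      then have "N * a1 < i * a1" using a1 by (intro mult_less_mono1) auto
      moreover have "i * a1 \<le> a1 * N" using ni by linarith
      ultimately show False by (simp add: mult.commute)
    qed
    have "r = real (N - i) / real N"
      using mn(2) \<open>n = a1 * (N - i)\<close> assms a1pos a2pos by (simp add: field_simps)
    then show "r \<in> (\<lambda>k. real k / real N) ` {..N}" by auto
  qed
next
  show "(\<lambda>k. real k / real N) ` {..N} \<subseteq> Rx (a1 * a2 * N)"
  proof
    fix r assume "r \<in> (\<lambda>k. real k / real N) ` {..N}"
    then obtain k where k: "k \<le> N" "r = real k / real N" by auto
    obtain j where "N = k + j" using k(1) le_Suc_ex by blast
    then have "(a2 * (N - k)) * a1 + (a1 * k) * a2 = a1 * a2 * N"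
      by (simp add: algebra_simps)
    then have "(a2 * (N - k), a1 * k) \<in> factorizations a1 a2 (a1 * a2 * N)" unfolding factorizations_def by auto
    moreover have "r = real a2 * real (a1 * k) / real (a1 * a2 * N)"
      using k(2) assms a1pos a2pos by (simp add: field_simps)
    ultimately show "r \<in> Rx (a1 * a2 * N)" unfolding Rx_def by force
  qed
qed


lemma mult_in_semigrp: "a1 * a2 * N \<in> semigrp a1 a2"
  unfolding semigrp_def by (rule CollectI, rule exI[of _ 0], rule exI[of _ "a1 * N"]) (simp add: algebra_simps)

lemma dense_high: assumes y: "sgap < y" "y < real a2" shows "y \<in> closure (delta_t_S a1 a2 t)"
proof -
  define w where "w = - y / (real a1 * real a2)"
  have a12p: "real a1 * real a2 > 0" using a1pos a2pos by simp
  have "D 0 \<le> w" unfolding w_def D_0 using y a1pos a2pos by (simp add: field_simps)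
  moreover have "w \<le> D rho" unfolding w_def using y(1) a12p unfolding sgap_def by (simp add: field_simps)
  moreover have "continuous_on {0..rho} D" using cont_D by (rule continuous_on_subset) (use rho_lt1 in auto)
  ultimately obtain rs where rs: "0 \<le> rs" "rs \<le> rho" "D rs = w" using IVT'[of D 0 w rho] rho by auto
  have "rs \<noteq> 0"
  proof
    assume "rs = 0"
    then have "- 1 / real a1 = - y / (real a1 * real a2)" using rs(3) D_0 w_def by simp
    then have "y = real a2" using a1pos a2pos by (simp add: field_simps)
    then show False using y by simp
  qed
  moreover have "rs \<noteq> rho" using rs(3) y(1) a12p unfolding w_def sgap_def by (auto simp: field_simps)
  ultimately have rs': "0 < rs" "rs < rho" using rs by auto
  show ?thesis unfolding closure_approachable
  proof (intro allI impI)
    fix e :: real assume e: "e > 0"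
    have ep: "e / (real a1 * real a2) > 0" using e a12p by simp
    have rsin: "rs \<in> {0..1}" using rs' rho_lt1 by auto
    from cont_D[unfolded continuous_on_iff, rule_format, OF rsin ep]
    obtain d where dp: "d > 0" and dD: "\<And>r. r \<in> {0..1} \<Longrightarrow> dist r rs < d \<Longrightarrow> dist (D r) (D rs) < e / (real a1 * real a2)"
      by blast
    obtain N :: nat where N: "N > 0" "inverse (real N) < min d (rho - rs)"
      using ex_inverse_of_nat_less[of "min d (rho - rs)"] dp rs' by auto
    have Np: "real N > 0" using N by simp
    define k where "k = nat \<lfloor>rs * N\<rfloor>"
    have k1: "real k \<le> rs * N" unfolding k_def using rs' Np by simp
    have k2: "rs * N < real k + 1" unfolding k_def using rs' Np by linarith
    have "rs + 1 / N < rho" using N(2) by (simp add: inverse_eq_divide)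
    then have "(rs + 1/N) * N < rho * N" using Np by (intro mult_strict_right_mono) auto
    moreover have "(rs + 1/N) * N = rs * N + 1" using Np by (simp add: algebra_simps)
    moreover have "rho * real N < 1 * real N" using Np rho_lt1 by (intro mult_strict_right_mono) auto
    ultimately have "rs * N + 1 < N" by simp
    then have kN: "k + 1 \<le> N" using k1 by linarith
    define x where "x = a1 * a2 * N"
    have xp: "x > 0" unfolding x_def using N a1 a12 by simp
    have Xe: "real x = real a1 * real a2 * real N" unfolding x_def by simp
    have RX: "Rx x = (\<lambda>k. real k / real N) ` {..N}" unfolding x_def by (rule Rx_mult[OF N(1)])
    define r2 where "r2 = real k / real N"
    define r3 where "r3 = real (k + 1) / real N"
    have r23: "r3 = r2 + 1 / real N" unfolding r2_def r3_def by (simp add: add_divide_distrib)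
    have r2in: "r2 \<in> Rx x" "r3 \<in> Rx x" unfolding RX r2_def r3_def using kN
      by (auto intro!: image_eqI[where x="k+1"] simp del: of_nat_add of_nat_Suc)
    have r2le: "r2 \<le> rs" "rs < r3" unfolding r2_def r3_def using k1 k2 Np by (auto simp: field_simps)
    have r3rho: "r3 < rho" using r23 r2le \<open>rs + 1 / N < rho\<close> by simp
    have r20: "0 \<le> r2" unfolding r2_def by simp
    have Mlt: "M r3 < M r2" using M_dec[of r2 r3] r20 r23 Np r3rho rho by auto
    have cons: "\<not> (real x * M r3 < real x * M r \<and> real x * M r < real x * M r2)" if "r \<in> Rx x" for r
    proof -
      have "r \<in> (\<lambda>k. real k / real N) ` {..N}" using that RX by simp
      then obtain i where i: "i \<le> N" "r = real i / real N" by auto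
      show ?thesis
      proof (cases "i \<le> k")
        case True
        then have "r \<le> r2" unfolding i(2) r2_def using Np by (simp add: divide_right_mono)
        moreover have "r2 \<le> zeta" using r23 r3rho rho Np by (smt (verit) divide_pos_pos)
        ultimately have "M r2 \<le> M r" using M_dec'[of r r2] i by auto
        then show ?thesis using xp by auto
      next
        case False
        then have "r3 \<le> r" unfolding i(2) r3_def using Np by (simp add: divide_right_mono)
        have "M r \<le> M r3"
        proof (cases "r \<le> rho")
          case True
          then show ?thesis using M_dec'[of r3 r] \<open>r3 \<le> r\<close> r20 r23 Np rho by auto
        next
          case False
          have "r \<le> 1" using i Np by simp
          then show ?thesis using M_le_H[of r] False M_ge_H[of r3] r3rho r20 r23 Np by auto
        qed
        then show ?thesis using xp by auto
      qed
    qed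
    have gin: "real x * M r2 - real x * M r3 \<in> delta_t a1 a2 t x"
      using intro_delta[OF xp r2in(2) r2in(1) _ cons] Mlt xp by simp
    have r3e: "r3 = r2 + real a1 * real a2 / real x" unfolding r23 Xe using a1pos a2pos by simp
    have "r2 < r3" "r3 \<le> 1" using r23 Np r3rho rho_lt1 by auto
    then obtain z where z: "r2 < z" "z < r3" "real x * M r3 - real x * M r2 = real a1 * real a2 * D z"
      using step_mvt[of "real x" r2 r3, OF _ r20 _ _ r3e] xp by auto
    have "\<bar>z - rs\<bar> < d"
    proof -
      have "\<bar>z - rs\<bar> < 1 / real N" using z r2le r23 by auto
      also have "1 / real N < d" using N(2) by (simp add: inverse_eq_divide)
      finally show ?thesis .
    qed
    then have "\<bar>D z - D rs\<bar> < e / (real a1 * real a2)" using dD[of z] z r20 r3rho rho_lt1 by (auto simp: dist_real_def)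
    then have "real a1 * real a2 * \<bar>D z - D rs\<bar> < e" using a12p by (simp add: field_simps)
    moreover have "y = - (real a1 * real a2 * D rs)" using rs(3) a12p unfolding w_def by simp
    moreover have "real x * M r2 - real x * M r3 - y = (real a1 * real a2) * (D rs - D z)"
      using z(3) \<open>y = - (real a1 * real a2 * D rs)\<close> by (simp add: algebra_simps)
    moreover have "\<bar>(real a1 * real a2) * (D rs - D z)\<bar> = real a1 * real a2 * \<bar>D z - D rs\<bar>"
      using a12p by (simp add: abs_mult abs_minus_commute)
    ultimately have "dist (real x * M r2 - real x * M r3) y < e" unfolding dist_real_def by simp
    moreover have "real x * M r2 - real x * M r3 \<in> delta_t_S a1 a2 t"
      unfolding delta_t_S_def x_def using gin mult_in_semigrp unfolding x_def by blast
    ultimately show "\<exists>g\<in>delta_t_S a1 a2 t. dist g y < e" by blast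
  qed
qed


lemma dense_low: assumes irr: "rho \<notin> \<rat>" and y: "0 < y" "y < sgap" shows "y \<in> closure (delta_t_S a1 a2 t)"
  unfolding closure_approachable
proof (intro allI impI)
  fix e :: real assume e: "e > 0"
  have a12p: "real a1 * real a2 > 0" using a1pos a2pos by simp
  define \<theta> where "\<theta> = y / sgap"
  have th: "0 \<le> \<theta>" "\<theta> \<le> 1" unfolding \<theta>_def using y sgap_pos by auto
  have ep1: "e / (2 * (real a1 * real a2)) > 0" using e a12p by simp
  have ep2: "e / (2 * sgap) > 0" using e sgap_pos by simp
  have rin: "rho \<in> {0..1}" using rho rho_lt1 by auto
  from cont_D[unfolded continuous_on_iff, rule_format, OF rin ep1]
  obtain d where dp: "d > 0" and dD: "\<And>r. r \<in> {0..1} \<Longrightarrow> dist r rho < d \<Longrightarrow> dist (D r) (D rho) < e / (2 * (real a1 * real a2))"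
    by blast
  obtain N0 :: nat where N0: "N0 > 0" "inverse (real N0) < d"
    using ex_inverse_of_nat_less[of d] dp by auto
  have irr': "real N0 * rho \<notin> \<rat>"
  proof
    assume "real N0 * rho \<in> \<rat>"
    then have "(real N0 * rho) / real N0 \<in> \<rat>" by (intro Rats_divide) auto
    then show False using irr N0 by simp
  qed
  obtain k where k: "k > 0" "\<bar>frac (real k * (real N0 * rho)) - \<theta>\<bar> < e / (2 * sgap)"
    using Kronecker_approx_1_explicit[OF irr' th ep2] by blast
  define N where "N = k * N0"
  have Np: "real N > 0" unfolding N_def using k N0 by simp
  have "N0 \<le> k * N0" using k by simp
  then have NN0: "real N \<ge> real N0" unfolding N_def by linarith
  have fr: "frac (real N * rho) = frac (real k * (real N0 * rho))" unfolding N_def by (simp add: mult.assoc)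
  define f where "f = frac (real N * rho)"
  have f01: "0 \<le> f" "f < 1" unfolding f_def by (auto simp: frac_lt_1)
  have fth: "\<bar>f - \<theta>\<bar> < e / (2 * sgap)" unfolding f_def fr using k by simp
  define j where "j = nat \<lfloor>real N * rho\<rfloor>"
  have fl0: "\<lfloor>real N * rho\<rfloor> \<ge> 0" using Np rho by simp
  have jf: "real j = real N * rho - f" unfolding j_def f_def frac_def using fl0 by simp
  have fpos: "f > 0"
  proof -
    have "f \<noteq> 0"
    proof
      assume "f = 0"
      then have "real N * rho = real j" using jf by simp
      then have "rho = real j / real N" using Np by (simp add: field_simps)
      then show False using irr by simp
    qed
    then show ?thesis using f01 by simp
  qed
  have jN: "j \<le> N"
  proof -
    have "real N * rho < real N * 1" using Np rho_lt1 by (intro mult_strict_left_mono) auto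
    then have "real j < real N" using jf fpos by simp
    then show ?thesis by simp
  qed
  define x where "x = a1 * a2 * N"
  have xp: "x > 0" unfolding x_def using Np a1 a12 by simp
  have Xe: "real x = real a1 * real a2 * real N" unfolding x_def by simp
  have RX: "Rx x = (\<lambda>k. real k / real N) ` {..N}" unfolding x_def by (rule Rx_mult) (use Np in simp)
  define r2 where "r2 = real j / real N"
  have r2e: "rho - r2 = f / real N" unfolding r2_def jf using Np by (simp add: field_simps)
  have "f / real N > 0" using fpos Np by simp
  then have r2lt: "r2 < rho" using r2e by simp
  have r20: "0 \<le> r2" unfolding r2_def by simp
  have r2in: "r2 \<in> Rx x" "1 \<in> Rx x" unfolding RX r2_def using jN Np
    by (auto intro!: image_eqI[where x=N])
  have Mlt: "M 1 < M r2" using M_above[of r2] r20 r2lt M_1 by simp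
  have cons: "\<not> (real x * M 1 < real x * M r \<and> real x * M r < real x * M r2)" if "r \<in> Rx x" for r
  proof -
    have "r \<in> (\<lambda>k. real k / real N) ` {..N}" using that RX by simp
    then obtain i where i: "i \<le> N" "r = real i / real N" by auto
    show ?thesis
    proof (cases "i \<le> j")
      case True
      then have "r \<le> r2" unfolding i(2) r2_def using Np by (simp add: divide_right_mono)
      moreover have "r2 \<le> zeta" using r2lt rho by simp
      ultimately have "M r2 \<le> M r" using M_dec'[of r r2] i by auto
      then show ?thesis using xp by auto
    next
      case False
      then have "real i \<ge> real j + 1" by simp
      then have "real i / real N \<ge> (real j + 1) / real N" using Np by (simp add: divide_right_mono)
      moreover have "(real j + 1) / real N > rho" using jf f01 Np by (simp add: field_simps)
      ultimately have "rho \<le> r" "r \<le> 1" using i Np by auto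
      then have "M r \<le> M 1" using M_le_H[of r] M_1 by simp
      then show ?thesis using xp by auto
    qed
  qed
  have gin: "real x * M r2 - real x * M 1 \<in> delta_t a1 a2 t x"
    using intro_delta[OF xp r2in(2) r2in(1) _ cons] Mlt xp by simp
  obtain z where z: "r2 < z" "z < rho" "M rho - M r2 = (rho - r2) * D z"
    using M_mvt[of r2 rho] r20 r2lt rho_lt1 by auto
  have "\<bar>z - rho\<bar> < d"
  proof -
    have "\<bar>z - rho\<bar> < f / real N" using z r2e by auto
    also have "\<dots> \<le> 1 / real N" using f01 Np by (simp add: divide_right_mono)
    also have "\<dots> \<le> 1 / real N0" using NN0 N0 by (simp add: frac_le)
    also have "\<dots> < d" using N0 by (simp add: inverse_eq_divide)
    finally show ?thesis .
  qed
  then have Dz: "\<bar>D z - D rho\<bar> < e / (2 * (real a1 * real a2))" using dD[of z] z r20 rho_lt1 by (auto simp: dist_real_def)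
  have geq: "real x * M r2 - real x * M 1 = real a1 * real a2 * f * (- D z)"
  proof -
    have "real x * M r2 - real x * M 1 = real x * (M r2 - M rho)" using M_1 rho by (simp add: algebra_simps)
    also have "M r2 - M rho = (rho - r2) * (- D z)" using z(3) by (simp add: algebra_simps)
    then have "real x * (M r2 - M rho) = real x * (rho - r2) * (- D z)" by simp
    also have "real x * (rho - r2) = real a1 * real a2 * f" unfolding Xe r2e using Np by simp
    finally show ?thesis .
  qed
  have "y = sgap * \<theta>" unfolding \<theta>_def using sgap_pos by simp
  then have ydef: "y = real a1 * real a2 * (- D rho) * \<theta>" unfolding sgap_def by simp
  have "real x * M r2 - real x * M 1 - y = real a1 * real a2 * f * (D rho - D z) + sgap * (f - \<theta>)"
    unfolding geq ydef sgap_def by (simp add: algebra_simps)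
  moreover have "\<bar>real a1 * real a2 * f * (D rho - D z)\<bar> \<le> e / 2"
  proof -
    have "\<bar>real a1 * real a2 * f * (D rho - D z)\<bar> = real a1 * real a2 * f * \<bar>D z - D rho\<bar>"
      using a12p f01 by (simp add: abs_mult abs_minus_commute)
    also have "\<dots> \<le> real a1 * real a2 * 1 * (e / (2 * (real a1 * real a2)))"
      using a12p f01 Dz by (intro mult_mono) auto
    also have "\<dots> = e / 2" using a12p by simp
    finally show ?thesis .
  qed
  moreover have "\<bar>sgap * (f - \<theta>)\<bar> < e / 2"
  proof -
    have "\<bar>sgap * (f - \<theta>)\<bar> = sgap * \<bar>f - \<theta>\<bar>" using sgap_pos by (simp add: abs_mult)
    also have "\<dots> < sgap * (e / (2 * sgap))" using fth sgap_pos by (intro mult_strict_left_mono) auto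
    also have "\<dots> = e / 2" using sgap_pos by simp
    finally show ?thesis .
  qed
  ultimately have "dist (real x * M r2 - real x * M 1) y < e" unfolding dist_real_def by linarith
  moreover have "real x * M r2 - real x * M 1 \<in> delta_t_S a1 a2 t"
    unfolding delta_t_S_def using gin mult_in_semigrp unfolding x_def by blast
  ultimately show "\<exists>g\<in>delta_t_S a1 a2 t. dist g y < e" by blast
qed

lemma dull_irr: assumes "rho \<notin> \<rat>" shows "dull a1 a2 t"
proof -
  let ?C = "closure (delta_t_S a1 a2 t)"
  have "{0<..<sgap} \<subseteq> ?C" using dense_low[OF assms] by auto
  then have "closure {0<..<sgap} \<subseteq> ?C" by (metis closure_closure closure_mono)
  then have 1: "{0..sgap} \<subseteq> ?C" using sgap_pos by simp
  have 2: "{sgap..real a2} \<subseteq> ?C"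
  proof (cases "sgap < real a2")
    case True
    have "{sgap<..<real a2} \<subseteq> ?C" using dense_high by auto
    then have "closure {sgap<..<real a2} \<subseteq> ?C" by (metis closure_closure closure_mono)
    then show ?thesis using True by simp
  next
    case False
    then show ?thesis using 1 sgap_pos by auto
  qed
  have "{0..real a2} \<subseteq> {0..sgap} \<union> {sgap..real a2}" by auto
  then show ?thesis unfolding dull_def using 1 2 by blast
qed

end


context tsg
begin

lemma E1: "0 < r0 a1 a2 t" "r0 a1 a2 t < 1" using r0_eq rho rho_lt1 by auto
lemma E2: "0 \<le> r \<Longrightarrow> r < r0 a1 a2 t \<Longrightarrow> mu a1 a2 r t > 1 / real a2"
  using r0_eq M_above mu_eq rho_lt1 by auto
lemma E3: "r0 a1 a2 t < r \<Longrightarrow> r < 1 \<Longrightarrow> mu a1 a2 r t < 1 / real a2"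
  using r0_eq M_below mu_eq rho by auto
lemma E4: "mu a1 a2 (r0 a1 a2 t) t = 1 / real a2"
  using r0_eq rho mu_eq rho_lt1 by auto

lemma sgap_lower: "sgap \<ge> real a2 - (real a1 + real a2) * rho powr (t - 1)"
proof -
  have g: "GG rho > 0" using GG_pos rho rho_lt1 by auto
  have "GG rho = (M rho) powr t" unfolding M_def using g t1 by (simp add: powr_powr)
  then have G: "GG rho = 1 / real a2 powr t" using rho a2pos by (simp add: powr_divide)
  have "vv rho powr t = rho powr t / real a2 powr t" unfolding vv_def using rho a2pos by (simp add: powr_divide)
  then have Pr: "P rho = rho powr t" unfolding P_def G using a2pos by simp
  define W where "W = 1 - P rho"
  have W01: "0 \<le> W" "W \<le> 1" unfolding W_def using P_range[of rho] rho rho_lt1 by auto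
  have e1: "(t - 1) / t \<le> 1" using t1 by simp
  have "W powr 1 \<le> W powr ((t-1)/t)" using W01 e1 by (intro powr_mono') auto
  then have We: "W \<le> W powr ((t-1)/t)" using W01 by simp
  have Pe: "P rho powr ((t-1)/t) = rho powr (t - 1)" unfolding Pr using t1 rho by (simp add: powr_powr)
  have "sgap = real a2 * W powr ((t-1)/t) - real a1 * rho powr (t - 1)"
    unfolding sgap_def D_def hh_def W_def[symmetric] Pe[symmetric] using a1pos a2pos by (simp add: field_simps)
  also have "\<dots> \<ge> real a2 * W - real a1 * rho powr (t - 1)" using We a2pos by simp
  finally have 1: "sgap \<ge> real a2 * W - real a1 * rho powr (t - 1)" .
  have "rho powr t \<le> rho powr (t - 1)" using rho rho_lt1 by (intro powr_mono') auto
  then have "real a2 * rho powr t \<le> real a2 * rho powr (t - 1)" using a2pos by (intro mult_left_mono) auto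
  then have "real a2 * W \<ge> real a2 - real a2 * rho powr (t - 1)" unfolding W_def Pr by (simp add: algebra_simps)
  then show ?thesis using 1 by (simp add: algebra_simps)
qed

end

lemma tsgI: "1 < a1 \<Longrightarrow> a1 < a2 \<Longrightarrow> coprime a1 a2 \<Longrightarrow> 1 < t \<Longrightarrow> tsg a1 a2 t"
  unfolding tsg_def by auto

lemma tnorm_scale: assumes "a > 0" "u \<ge> 0" "v \<ge> 0" "t > 0"
  shows "a * tnorm t (u, v) = tnorm t (a * u, a * v)"
proof -
  have "tnorm t (a * u, a * v) = (a powr t * (u powr t + v powr t)) powr (1/t)"
    unfolding tnorm_def using assms by (simp add: powr_mult algebra_simps abs_mult)
  also have "\<dots> = a * (u powr t + v powr t) powr (1/t)" using assms by (simp add: powr_mult powr_powr)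
  finally show ?thesis unfolding tnorm_def using assms by simp
qed

lemma root_cmp: fixes S t :: real assumes "S \<ge> 0" "t > 0"
  shows "S powr (1/t) = 1 \<longleftrightarrow> S = 1" "S powr (1/t) < 1 \<longleftrightarrow> S < 1"
proof -
  have inv: "(S powr (1/t)) powr t = S"
  proof -
    have "(S powr (1/t)) powr t = S powr (1/t * t)" by (rule powr_powr)
    also have "1/t * t = 1" using assms by simp
    finally show ?thesis using assms by simp
  qed
  show "S powr (1/t) = 1 \<longleftrightarrow> S = 1" by (metis inv powr_one_eq_one)
  show "S powr (1/t) < 1 \<longleftrightarrow> S < 1"
  proof
    assume "S powr (1/t) < 1"
    then have "(S powr (1/t)) powr t < 1 powr t" using assms by (intro powr_less_mono2) auto
    then show "S < 1" using inv by simp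
  next
    assume "S < 1"
    then have "S powr (1/t) < 1 powr (1/t)" using assms by (intro powr_less_mono2) auto
    then show "S powr (1/t) < 1" by simp
  qed
qed


lemma r0_decr: assumes h: "1 < a1" "a1 < a2" "coprime a1 a2" and tt: "1 < t" "t < t'"
  shows "r0 a1 a2 t' < r0 a1 a2 t"
proof -
  interpret T: tsg a1 a2 t using h tt by (intro tsgI) auto
  interpret T': tsg a1 a2 t' using h tt by (intro tsgI) auto
  define \<rho> where "\<rho> = r0 a1 a2 t"
  have rr: "0 < \<rho>" "\<rho> < 1" unfolding \<rho>_def using T.E1 by auto
  define U where "U = real a2 * ((1 - \<rho>) / real a1)"
  have a2p: "real a2 > 0" using h by simp
  have Up: "U > 0" unfolding U_def using rr h by simp
  have Ve: "real a2 * (\<rho> / real a2) = \<rho>" using a2p by simp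
  have "real a2 * mu a1 a2 \<rho> t = 1" using T.E4 a2p unfolding \<rho>_def by simp
  then have "tnorm t (U, \<rho>) = 1" unfolding mu_def U_def
    using tnorm_scale[of "real a2" "(1 - \<rho>) / real a1" "\<rho> / real a2" t] a2p rr tt h Ve by simp
  then have "(U powr t + \<rho> powr t) powr (1/t) = 1" unfolding tnorm_def using Up rr by simp
  then have S1: "U powr t + \<rho> powr t = 1" using root_cmp(1)[of "U powr t + \<rho> powr t" t] tt by simp
  have "U \<le> 1"
  proof (rule ccontr)
    assume "\<not> U \<le> 1"
    then have "1 powr t < U powr t" using tt by (intro powr_less_mono2) auto
    moreover have "\<rho> powr t > 0" using rr by simp
    ultimately show False using S1 by simp
  qed
  then have "U powr t' \<le> U powr t" using Up tt by (intro powr_mono') auto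
  moreover have "\<rho> powr t' < \<rho> powr t" using rr tt by (intro powr_less_mono') auto
  ultimately have "U powr t' + \<rho> powr t' < 1" using S1 by simp
  then have "(U powr t' + \<rho> powr t') powr (1/t') < 1" using root_cmp(2)[of "U powr t' + \<rho> powr t'" t'] tt by simp
  then have "tnorm t' (U, \<rho>) < 1" unfolding tnorm_def using Up rr by simp
  then have "real a2 * mu a1 a2 \<rho> t' < 1" unfolding mu_def U_def
    using tnorm_scale[of "real a2" "(1 - \<rho>) / real a1" "\<rho> / real a2" t'] a2p rr tt h Ve by simp
  then have lt: "mu a1 a2 \<rho> t' < 1 / real a2" using a2p by (simp add: field_simps)
  show ?thesis
  proof (rule ccontr)
    assume "\<not> r0 a1 a2 t' < r0 a1 a2 t"
    then have "\<rho> \<le> r0 a1 a2 t'" unfolding \<rho>_def by simp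
    then show False
    proof (cases "\<rho> = r0 a1 a2 t'")
      case True then show False using T'.E4 lt by simp
    next
      case False then show False using T'.E2[of \<rho>] rr lt \<open>\<rho> \<le> r0 a1 a2 t'\<close> by simp
    qed
  qed
qed

lemma r0_ivt: assumes h: "1 < a1" "a1 < a2" "coprime a1 a2" and tt: "1 < t1" "t1 < t2"
  and q: "r0 a1 a2 t2 < q" "q < r0 a1 a2 t1"
  shows "\<exists>t. t1 < t \<and> t < t2 \<and> r0 a1 a2 t = q"
proof -
  interpret T1: tsg a1 a2 t1 using h tt by (intro tsgI) auto
  interpret T2: tsg a1 a2 t2 using h tt by (intro tsgI) auto
  have q01: "0 < q" "q < 1" using q T1.E1 T2.E1 by auto
  define c1 where "c1 = (1 - q) / real a1"
  define c2 where "c2 = q / real a2"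
  have c: "c1 > 0" "c2 > 0" unfolding c1_def c2_def using q01 h by auto
  have phi: "\<And>s. mu a1 a2 q s = (c1 powr s + c2 powr s) powr (1/s)"
    unfolding mu_def tnorm_def c1_def c2_def using q01 h by simp
  have cont: "continuous_on {t1..t2} (\<lambda>s. mu a1 a2 q s)"
    unfolding phi using c tt
    by (intro continuous_intros) (auto, metis add_pos_pos powr_gt_zero less_irrefl less_numeral_extra(3) c)
  have "mu a1 a2 q t2 \<le> 1 / real a2" using T2.E3[of q] q q01 by simp
  moreover have "1 / real a2 \<le> mu a1 a2 q t1" using T1.E2[of q] q q01 by simp
  ultimately obtain s where s: "t1 \<le> s" "s \<le> t2" "mu a1 a2 q s = 1 / real a2"
    using IVT2'[where f="\<lambda>s. mu a1 a2 q s" and a=t1 and b=t2 and y="1 / real a2"] cont tt by auto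
  have "s \<noteq> t1" using s(3) T1.E2[of q] q q01 by auto
  moreover have "s \<noteq> t2" using s(3) T2.E3[of q] q q01 by auto
  ultimately have s': "t1 < s" "s < t2" using s by auto
  interpret S: tsg a1 a2 s using h tt s' by (intro tsgI) auto
  have "r0 a1 a2 s = q"
  proof (rule ccontr)
    assume "r0 a1 a2 s \<noteq> q"
    then consider "q < r0 a1 a2 s" | "r0 a1 a2 s < q" by linarith
    then show False
    proof cases
      case 1 then show False using S.E2[of q] q01 s(3) by simp
    next
      case 2 then show False using S.E3[of q] q01 s(3) by simp
    qed
  qed
  then show ?thesis using s' by auto
qed



theorem theorem1:
  fixes a1 a2 :: nat
  assumes "1 < a1" and "a1 < a2" and "coprime a1 a2"
  shows "{t. perspicacious a1 a2 t} \<subseteq> {t. 1 \<le> t \<and> r0 a1 a2 t \<in> \<rat>}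
         \<and> countable {t. perspicacious a1 a2 t}
         \<and> (\<exists>T. {T<..} \<subseteq> closure {t. perspicacious a1 a2 t})"
proof -
  note h = assms
  have part1: "{t. perspicacious a1 a2 t} \<subseteq> {t. 1 \<le> t \<and> r0 a1 a2 t \<in> \<rat>}"
  proof
    fix t assume "t \<in> {t. perspicacious a1 a2 t}"
    then have t: "1 < t" "\<not> dull a1 a2 t" unfolding perspicacious_def by auto
    interpret T: tsg a1 a2 t using h t by (intro tsgI) auto
    have "r0 a1 a2 t \<in> \<rat>" using T.dull_irr t(2) T.r0_eq by auto
    then show "t \<in> {t. 1 \<le> t \<and> r0 a1 a2 t \<in> \<rat>}" using t by auto
  qed
  have inj: "inj_on (\<lambda>t. r0 a1 a2 t) {t. perspicacious a1 a2 t}"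
  proof (rule inj_onI)
    fix t t' assume tt: "t \<in> {t. perspicacious a1 a2 t}" "t' \<in> {t. perspicacious a1 a2 t}" "r0 a1 a2 t = r0 a1 a2 t'"
    then have "1 < t" "1 < t'" unfolding perspicacious_def by auto
    show "t = t'"
    proof (rule ccontr)
      assume "t \<noteq> t'"
      then consider "t < t'" | "t' < t" by linarith
      then show False
      proof cases
        case 1 then show False using r0_decr[OF h \<open>1 < t\<close> 1] tt(3) by simp
      next
        case 2 then show False using r0_decr[OF h \<open>1 < t'\<close> 2] tt(3) by simp
      qed
    qed
  qed
  have part2: "countable {t. perspicacious a1 a2 t}"
  proof (rule countable_image_inj_on[OF _ inj])
    have "(\<lambda>t. r0 a1 a2 t) ` {t. perspicacious a1 a2 t} \<subseteq> \<rat>" using part1 by auto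
    then show "countable ((\<lambda>t. r0 a1 a2 t) ` {t. perspicacious a1 a2 t})"
      using countable_rat countable_subset by blast
  qed
  interpret T2: tsg a1 a2 2 using h by (intro tsgI) auto
  define \<beta> where "\<beta> = r0 a1 a2 2"
  have \<beta>: "0 < \<beta>" "\<beta> < 1" unfolding \<beta>_def using T2.E1 by auto
  define \<kappa> where "\<kappa> = (real a2 - real a1) / (real a1 + real a2)"
  have \<kappa>p: "\<kappa> > 0" unfolding \<kappa>_def using h by simp
  have "(\<lambda>n. \<beta> ^ n) \<longlonglongrightarrow> 0" using \<beta> by (intro LIMSEQ_power_zero) auto
  then have "eventually (\<lambda>n. \<beta> ^ n < \<kappa>) sequentially" using \<kappa>p by (rule order_tendstoD(2))
  then obtain n where n: "\<beta> ^ n < \<kappa>" unfolding eventually_sequentially by auto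
  define T where "T = max 2 (real n + 1)"
  have big: "tsg.sgap a1 a2 t > real a1" if "T < t" for t
  proof -
    have t2: "2 < t" "1 < t" using that unfolding T_def by auto
    interpret T: tsg a1 a2 t using h t2 by (intro tsgI) auto
    have "T.rho < \<beta>" unfolding \<beta>_def T.r0_eq[symmetric] using r0_decr[OF h _ t2(1)] by simp
    then have "T.rho powr (t - 1) \<le> \<beta> powr (t - 1)" using T.rho t2 by (intro powr_mono2) auto
    also have "\<beta> powr (t - 1) \<le> \<beta> powr (real n)" using \<beta> that unfolding T_def by (intro powr_mono') auto
    also have "\<dots> = \<beta> ^ n" using \<beta> by (simp add: powr_realpow)
    finally have "T.rho powr (t - 1) < \<kappa>" using n by simp
    then have "(real a1 + real a2) * T.rho powr (t - 1) < (real a1 + real a2) * \<kappa>"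
      using h by (intro mult_strict_left_mono) auto
    also have "(real a1 + real a2) * \<kappa> = real a2 - real a1" unfolding \<kappa>_def using h by simp
    finally show ?thesis using T.sgap_lower by linarith
  qed
  have part3: "{T<..} \<subseteq> closure {t. perspicacious a1 a2 t}"
  proof
    fix y assume "y \<in> {T<..}"
    then have yT: "T < y" by simp
    show "y \<in> closure {t. perspicacious a1 a2 t}" unfolding closure_approachable
    proof (intro allI impI)
      fix e :: real assume e: "e > 0"
      obtain m where m: "0 < m" "m \<le> e" "m \<le> y - T" using e yT
        by (metis min.cobounded1 min.cobounded2 min_less_iff_conj diff_gt_0_iff_gt)
      define t1 where "t1 = y - m / 2"
      define t2 where "t2 = y + e / 2"
      have t12a: "T < t1" using m t1_def yT by linarith
      have t12b: "t1 < y" using m t1_def by linarith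
      have t12c: "y < t2" using e t2_def by linarith
      note t12 = t12a t12b t12c less_trans[OF t12b t12c]
      have t1g: "1 < t1" using t12 unfolding T_def by auto
      have "r0 a1 a2 t2 < r0 a1 a2 t1" using r0_decr[OF h t1g t12(4)] .
      then obtain q where q: "q \<in> \<rat>" "r0 a1 a2 t2 < q" "q < r0 a1 a2 t1"
        using Rats_dense_in_real by blast
      obtain t where t: "t1 < t" "t < t2" "r0 a1 a2 t = q" using r0_ivt[OF h t1g t12(4) q(2) q(3)] by blast
      have tg: "1 < t" "T < t" using t t1g t12 by auto
      interpret T: tsg a1 a2 t using h tg by (intro tsgI) auto
      have "\<not> dull a1 a2 t" using T.persp_rat big[OF tg(2)] q(1) t(3) T.r0_eq by simp
      then have "perspicacious a1 a2 t" unfolding perspicacious_def using tg by simp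
      moreover have "dist t y < e"
      proof -
        have "m / 2 < e" using e m by linarith
        then show ?thesis using t unfolding t1_def t2_def dist_real_def using e by auto
      qed
      ultimately show "\<exists>t'\<in>{t. perspicacious a1 a2 t}. dist t' y < e" by blast
    qed
  qed
  show ?thesis using part1 part2 part3 by blast
qed


end
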